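(* Let $n$ be the number of vertices and let $\epsilon,\delta>0$ satisfy $e^{4\epsilon}\delta<1/(16n)$. Every $(\epsilon,\delta)$-differentially oblivious $(3/4,1/3)$-tester for connectivity in graphs with maximal degree $2$ (in the incidence lists model) runs in time $\Omega(\sqrt{n}/e^{2\epsilon})$.
   Context: Incidence lists model with degree bound $d$: a graph $G$ on vertex set $V$, $|V|=n$, of maximal degree at most $d$ is represented by $f_G:V\times[d]\to V\cup\{0\}$ where $f_G(v,i)$ is the $i$-th neighbor of $v$ ($0$ if it does not exist); the tester accesses the graph by querying (probing) this function. The distance between two $n$-vertex graphs is $\mathrm{dist}_d(G_1,G_2)=|\{(v,i):v\in V,i\in[d],f_{G_1}(v,i)\ne f_{G_2}(v,i)\}|/(dn)$, and $G$ is $\gamma$-far from a property (set of graphs of maximal degree $d$) ${\cal P}$ if its distance to every $n$-vertex graph in ${\cal P}$ exceeds $\gamma$. A $(\beta,\gamma)$-tester for ${\cal P}$ is a probabilistic algorithm that outputs $1$ with probability at least $\beta$ if $G\in{\cal P}$ and outputs $0$ with probability at least $\beta$ if $G$ is $\gamma$-far from ${\cal P}$. Here ${\cal P}$ is the set of connected graphs of maximal degree $2$. Two $n$-vertex graphs are neighbors if one is obtained from the other by changing the neighbors of exactly one vertex. The tester is $(\epsilon,\delta)$-differentially oblivious if for all neighboring graphs $G,G'$ and every set $S$ of access patterns, $\Pr[\mathsf{Access}(G)\in S]\le e^{\epsilon}\Pr[\mathsf{Access}(G')\in S]+\delta$, where $\mathsf{Access}(G)$ is the ordered sequence of memory accesses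 of the tester on $G$. *)

theory Defs
  imports "HOL-Probability.Probability"
begin

text \<open>Vertices are 1..n; the value 0 means "no neighbour". A graph is given by
its incidence function f :: nat => nat => nat, where f v i is the i-th
neighbour of v (v in 1..n, i in 1..d).\<close>

type_synonym inc_fun = "nat \<Rightarrow> nat \<Rightarrow> nat"

definition valid_graph :: "nat \<Rightarrow> nat \<Rightarrow> inc_fun \<Rightarrow> bool" where
  "valid_graph d n f \<longleftrightarrow>
     (\<forall>v i. (v \<notin> {1..n} \<or> i \<notin> {1..d}) \<longrightarrow> f v i = 0) \<and>
     (\<forall>v\<in>{1..n}. \<forall>i\<in>{1..d}. f v i \<le> n \<and> f v i \<noteq> v) \<and>
     (\<forall>v\<in>{1..n}. \<forall>i\<in>{1..d}. \<forall>j\<in>{1..d}. i \<noteq> j \<and> f v i \<noteq> 0 \<longrightarrow> f v i \<noteq> f v j) \<and>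
     (\<forall>v\<in>{1..n}. \<forall>i\<in>{1..d}. \<forall>j\<in>{1..d}. i \<le> j \<and> f v i = 0 \<longrightarrow> f v j = 0) \<and>
     (\<forall>v\<in>{1..n}. \<forall>i\<in>{1..d}. f v i \<noteq> 0 \<longrightarrow> (\<exists>j\<in>{1..d}. f (f v i) j = v))"

definition adj :: "nat \<Rightarrow> inc_fun \<Rightarrow> nat \<Rightarrow> nat \<Rightarrow> bool" where
  "adj d f u w \<longleftrightarrow> w \<noteq> 0 \<and> (\<exists>i\<in>{1..d}. f u i = w)"

definition connected_graph :: "nat \<Rightarrow> nat \<Rightarrow> inc_fun \<Rightarrow> bool" where
  "connected_graph d n f \<longleftrightarrow> (\<forall>u\<in>{1..n}. \<forall>w\<in>{1..n}. (adj d f)\<^sup>*\<^sup>* u w)"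

definition in_P :: "nat \<Rightarrow> nat \<Rightarrow> inc_fun \<Rightarrow> bool" where
  "in_P d n f \<longleftrightarrow> valid_graph d n f \<and> connected_graph d n f"

definition dist_d :: "nat \<Rightarrow> nat \<Rightarrow> inc_fun \<Rightarrow> inc_fun \<Rightarrow> real" where
  "dist_d d n f g =
     real (card {(v, i). v \<in> {1..n} \<and> i \<in> {1..d} \<and> f v i \<noteq> g v i}) / real (d * n)"

definition far :: "nat \<Rightarrow> nat \<Rightarrow> real \<Rightarrow> inc_fun \<Rightarrow> bool" where
  "far d n \<gamma> f \<longleftrightarrow> (\<forall>g. in_P d n g \<longrightarrow> dist_d d n f g > \<gamma>)"

text \<open>Neighbouring graphs: obtained from one another by changing the neighbours of
exactly one vertex v: the graphs differ, adjacency among vertices other than v is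
unchanged, and incidence lists of vertices that are neither v nor a neighbour of v
(in either graph) are unchanged.\<close>
definition neighbouring :: "nat \<Rightarrow> nat \<Rightarrow> inc_fun \<Rightarrow> inc_fun \<Rightarrow> bool" where
  "neighbouring d n f g \<longleftrightarrow> f \<noteq> g \<and>
     (\<exists>v\<in>{1..n}.
        (\<forall>u w. u \<noteq> v \<and> w \<noteq> v \<longrightarrow> (adj d f u w \<longleftrightarrow> adj d g u w)) \<and>
        (\<forall>u. u \<noteq> v \<and> \<not> adj d f v u \<and> \<not> adj d g v u \<longrightarrow> (\<forall>i. f u i = g u i)))"

text \<open>A deterministic adaptive algorithm probing f: either halts with an output, or
probes (v,i) and continues depending on the answer. A randomised tester is a
probability distribution over such algorithms (its random coins).\<close>

datatype qtree = Leaf bool | Probe nat nat "nat \<Rightarrow> qtree"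

primrec run :: "qtree \<Rightarrow> inc_fun \<Rightarrow> (nat \<times> nat) list \<times> bool" where
  "run (Leaf b) f = ([], b)"
| "run (Probe v i k) f = (let r = run (k (f v i)) f in ((v, i) # fst r, snd r))"

definition access :: "qtree pmf \<Rightarrow> inc_fun \<Rightarrow> (nat \<times> nat) list pmf" where
  "access T f = map_pmf (\<lambda>t. fst (run t f)) T"

definition tester_output :: "qtree pmf \<Rightarrow> inc_fun \<Rightarrow> bool pmf" where
  "tester_output T f = map_pmf (\<lambda>t. snd (run t f)) T"

definition is_tester :: "nat \<Rightarrow> nat \<Rightarrow> real \<Rightarrow> real \<Rightarrow> qtree pmf \<Rightarrow> bool" where
  "is_tester d n \<beta> \<gamma> T \<longleftrightarrow>
     (\<forall>f. valid_graph d n f \<and> in_P d n f \<longrightarrow> measure_pmf.prob (tester_output T f) {True} \<ge> \<beta>) \<and>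
     (\<forall>f. valid_graph d n f \<and> far d n \<gamma> f \<longrightarrow> measure_pmf.prob (tester_output T f) {False} \<ge> \<beta>)"

definition diff_oblivious :: "nat \<Rightarrow> nat \<Rightarrow> real \<Rightarrow> real \<Rightarrow> qtree pmf \<Rightarrow> bool" where
  "diff_oblivious d n \<epsilon> \<delta> T \<longleftrightarrow>
     (\<forall>f g S. valid_graph d n f \<and> valid_graph d n g \<and> neighbouring d n f g \<longrightarrow>
        measure_pmf.prob (access T f) S \<le> exp \<epsilon> * measure_pmf.prob (access T g) S + \<delta>)"

text \<open>Running time (at least the number of probes) of coin outcome t on f.\<close>
definition num_probes :: "qtree \<Rightarrow> inc_fun \<Rightarrow> nat" where
  "num_probes t f = length (fst (run t f))"

end

theory Submission
  imports Defs "HOL-Combinatorics.Permutations"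
begin

definition gr :: "nat \<Rightarrow> (nat \<Rightarrow> nat) \<Rightarrow> inc_fun" where
  "gr n r v i = (if v \<in> {1..n} \<and> r v \<noteq> v then
     (if i = 1 then (if r (r v) = v then r v else inv r v)
      else if i = 2 \<and> r (r v) \<noteq> v then r v else 0) else 0)"

lemma perm_facts:
  assumes "r permutes {1..n}"
  shows "\<And>v. v \<in> {1..n} \<Longrightarrow> r v \<in> {1..n}"
    and "\<And>v. v \<in> {1..n} \<Longrightarrow> inv r v \<in> {1..n}"
    and "\<And>v. r (inv r v) = v" and "\<And>v. inv r (r v) = v"
    and "\<And>x y. (inv r y = x) = (r x = y)"
    and "\<And>x y. (r x = r y) = (x = y)"
proof -
  show "\<And>v. v \<in> {1..n} \<Longrightarrow> r v \<in> {1..n}" using permutes_in_image[OF assms] by simp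
  show "\<And>v. v \<in> {1..n} \<Longrightarrow> inv r v \<in> {1..n}" using permutes_in_image[OF permutes_inv[OF assms]] by simp
  show "\<And>v. r (inv r v) = v" "\<And>v. inv r (r v) = v" using permutes_inverses[OF assms] by simp_all
  show "\<And>x y. (inv r y = x) = (r x = y)" using permutes_inv_eq[OF assms] by simp
  show "\<And>x y. (r x = r y) = (x = y)" using permutes_inj[OF assms] by (simp add: inj_eq)
qed

lemma gr_valid:
  assumes r: "r permutes {1..n}"
  shows "valid_graph 2 n (gr n r)"
proof -
  note pf = perm_facts[OF r]
  have A: "\<forall>v i. (v \<notin> {1..n} \<or> i \<notin> {1..2}) \<longrightarrow> gr n r v i = 0"
    by (auto simp: gr_def)
  have B: "\<forall>v\<in>{1..n}. \<forall>i\<in>{1..2}. gr n r v i \<le> n \<and> gr n r v i \<noteq> v"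
  proof (intro ballI)
    fix v i assume v: "v \<in> {1..n}" and i: "i \<in> {1..(2::nat)}"
    have "r v \<in> {1..n}" "inv r v \<in> {1..n}" using pf v by auto
    moreover have "r v \<noteq> v \<Longrightarrow> inv r v \<noteq> v" using pf by metis
    ultimately show "gr n r v i \<le> n \<and> gr n r v i \<noteq> v"
      using v by (auto simp: gr_def)
  qed
  have C: "\<forall>v\<in>{1..n}. \<forall>i\<in>{1..2}. \<forall>j\<in>{1..2}. i \<noteq> j \<and> gr n r v i \<noteq> 0 \<longrightarrow> gr n r v i \<noteq> gr n r v j"
  proof (intro ballI impI)
    fix v i j assume v: "v \<in> {1..n}" and i: "i \<in> {1..(2::nat)}" and j: "j \<in> {1..(2::nat)}"
      and h: "i \<noteq> j \<and> gr n r v i \<noteq> 0"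
    have "r (r v) \<noteq> v \<Longrightarrow> inv r v \<noteq> r v" using pf by metis
    then show "gr n r v i \<noteq> gr n r v j" using h i j v
      by (auto simp: gr_def split: if_splits)
  qed
  have D: "\<forall>v\<in>{1..n}. \<forall>i\<in>{1..2}. \<forall>j\<in>{1..2}. i \<le> j \<and> gr n r v i = 0 \<longrightarrow> gr n r v j = 0"
  proof (intro ballI impI)
    fix v i j assume v: "v \<in> {1..n}" and i: "i \<in> {1..(2::nat)}" and j: "j \<in> {1..(2::nat)}"
      and h: "i \<le> j \<and> gr n r v i = 0"
    have "r v \<in> {1..n}" "inv r v \<in> {1..n}" using pf v by auto
    then show "gr n r v j = 0" using h i j v
      by (auto simp: gr_def split: if_splits)
  qed
  have E: "\<forall>v\<in>{1..n}. \<forall>i\<in>{1..2}. gr n r v i \<noteq> 0 \<longrightarrow> (\<exists>j\<in>{1..2}. gr n r (gr n r v i) j = v)"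
  proof (intro ballI impI)
    fix v i assume v: "v \<in> {1..n}" and i: "i \<in> {1..(2::nat)}" and h: "gr n r v i \<noteq> 0"
    have rv: "r v \<in> {1..n}" "inv r v \<in> {1..n}" using pf v by auto
    have fv: "r v \<noteq> v" using h by (auto simp: gr_def split: if_splits)
    show "\<exists>j\<in>{1..2}. gr n r (gr n r v i) j = v"
    proof (cases "r (r v) = v")
      case True
      then have "i = 1" "gr n r v i = r v" using h by (auto simp: gr_def split: if_splits)
      moreover have "gr n r (r v) 1 = v" using True rv fv by (auto simp: gr_def)
      ultimately show ?thesis by auto
    next
      case False
      show ?thesis
      proof (cases "i = 1")
        case True
        then have e: "gr n r v i = inv r v" using False fv v by (auto simp: gr_def)
        let ?w = "inv r v"
        have rw: "r ?w = v" using pf by auto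
        have "?w \<noteq> v" using fv pf by metis
        moreover have "r (r ?w) \<noteq> ?w" using False rw pf by metis
        ultimately have "gr n r ?w 2 = v" using rw rv by (auto simp: gr_def)
        then show ?thesis using e by auto
      next
        case False2: False
        then have "i = 2" using i by auto
        then have e: "gr n r v i = r v" using False fv v by (auto simp: gr_def)
        have iw: "inv r (r v) = v" using pf by auto
        have "r (r v) \<noteq> r v" using fv pf by metis
        moreover have "r (r (r v)) \<noteq> r v" using False pf by metis
        ultimately have "gr n r (r v) 1 = v" using iw rv by (auto simp: gr_def)
        then show ?thesis using e by auto
      qed
    qed
  qed
  show ?thesis unfolding valid_graph_def using A B C D E by blast
qed

lemma gr_adj:
  assumes r: "r permutes {1..n}"
  shows "adj 2 (gr n r) u w \<longleftrightarrow> u \<in> {1..n} \<and> w \<noteq> u \<and> (w = r u \<or> r w = u)"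
proof -
  note pf = perm_facts[OF r]
  show ?thesis
  proof
    assume "adj 2 (gr n r) u w"
    then obtain i where i: "i \<in> {1..2}" "gr n r u i = w" "w \<noteq> 0" by (auto simp: adj_def)
    then have u: "u \<in> {1..n}" "r u \<noteq> u" by (auto simp: gr_def split: if_splits)
    have "inv r u \<noteq> u" using u pf by metis
    then have "w \<noteq> u \<and> (w = r u \<or> r w = u)" using i u pf
      by (auto simp: gr_def split: if_splits)
    then show "u \<in> {1..n} \<and> w \<noteq> u \<and> (w = r u \<or> r w = u)" using u by auto
  next
    assume h: "u \<in> {1..n} \<and> w \<noteq> u \<and> (w = r u \<or> r w = u)"
    then have ru: "r u \<noteq> u" using pf by metis
    have wn: "w \<in> {1..n}" using h pf by (metis permutes_in_image permutes_inv_eq r)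
    then have w0: "w \<noteq> 0" by auto
    show "adj 2 (gr n r) u w"
    proof (cases "w = r u")
      case True
      show ?thesis
      proof (cases "r (r u) = u")
        case True2: True
        then have "gr n r u 1 = w" using True h ru by (auto simp: gr_def)
        then show ?thesis using w0 by (auto simp: adj_def)
      next
        case False
        then have "gr n r u 2 = w" using True h ru by (auto simp: gr_def)
        then show ?thesis using w0 by (auto simp: adj_def)
      qed
    next
      case False
      then have rw: "r w = u" using h by auto
      then have iw: "inv r u = w" using pf by auto
      show ?thesis
      proof (cases "r (r u) = u")
        case True2: True
        then have "r u = w" using rw pf by metis
        then show ?thesis using False by auto
      next
        case False2: False
        then have "gr n r u 1 = w" using iw h ru by (auto simp: gr_def)
        then show ?thesis using w0 by (auto simp: adj_def)
      qed
    qed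
  qed
qed

lemma gr_local:
  assumes r1: "r1 permutes {1..n}" and r2: "r2 permutes {1..n}"
    and "r1 u = r2 u" and "inv r1 u = inv r2 u"
  shows "gr n r1 u i = gr n r2 u i"
proof -
  have "r1 (r1 u) = u \<longleftrightarrow> inv r1 u = r1 u" using perm_facts(5)[OF r1] by metis
  moreover have "r2 (r2 u) = u \<longleftrightarrow> inv r2 u = r2 u" using perm_facts(5)[OF r2] by metis
  ultimately show ?thesis using assms by (auto simp: gr_def)
qed

lemma neighbouring_sym: "neighbouring d n f g \<Longrightarrow> neighbouring d n g f"
  unfolding neighbouring_def by metis

abbreviation tr where "tr \<equiv> Transposition.transpose"

lemma comp_tr_vals:
  "(r \<circ> tr a b) a = r b" "(r \<circ> tr a b) b = r a" "u \<noteq> a \<Longrightarrow> u \<noteq> b \<Longrightarrow> (r \<circ> tr a b) u = r u"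
  by auto

lemma nb_isolate:
  assumes r: "r permutes {1..n}" and V: "x \<in> {1..n}" "y \<in> {1..n}" "w \<in> {1..n}"
    and D: "x \<noteq> y" "y \<noteq> w" "x \<noteq> w" and E: "r x = y" "r y = w" "r w = x"
  shows "neighbouring 2 n (gr n r) (gr n (r \<circ> tr x w))"
proof -
  define r' where "r' = r \<circ> tr x w"
  have r': "r' permutes {1..n}" unfolding r'_def
    by (rule permutes_compose[OF permutes_swap_id[OF V(1) V(3)] r])
  have v1: "r' x = x" "r' w = y" "\<And>u. u \<noteq> x \<Longrightarrow> u \<noteq> w \<Longrightarrow> r' u = r u"
    using E by (auto simp: r'_def)
  note pf = perm_facts[OF r] and pf' = perm_facts[OF r']
  have ne: "gr n r \<noteq> gr n r'"
  proof
    assume h: "gr n r = gr n r'"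
    have "r (r x) \<noteq> x" using E D by auto
    then have "gr n r x 2 = y" using E D V by (auto simp: gr_def)
    moreover have "gr n r' x 2 = 0" using v1 by (auto simp: gr_def)
    ultimately show False using h V by auto
  qed
  have adjc: "\<forall>u u'. u \<noteq> x \<and> u' \<noteq> x \<longrightarrow> (adj 2 (gr n r) u u' \<longleftrightarrow> adj 2 (gr n r') u u')"
  proof (intro allI impI)
    fix u u' assume h: "u \<noteq> x \<and> u' \<noteq> x"
    have "(u' = r u \<or> r u' = u) \<longleftrightarrow> (u' = r' u \<or> r' u' = u)"
    proof (cases "u = w")
      case True
      have "r u' = w \<longleftrightarrow> u' = y" using pf(6)[of u' y] E by simp
      moreover have "r' u' = w \<longleftrightarrow> u' = y"
      proof (cases "u' = w")
        case True then show ?thesis using v1 D by auto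
      next
        case False
        then have "r' u' = r u'" using v1 h by auto
        then show ?thesis using pf(6)[of u' y] E by simp
      qed
      ultimately show ?thesis using True E v1 h by auto
    next
      case False
      then have ru: "r' u = r u" using v1 h by auto
      show ?thesis
      proof (cases "u' = w")
        case True
        then show ?thesis using ru v1 E h D by auto
      next
        case False
        then show ?thesis using ru v1 h by auto
      qed
    qed
    then show "adj 2 (gr n r) u u' \<longleftrightarrow> adj 2 (gr n r') u u'"
      using gr_adj[OF r] gr_adj[OF r'] by auto
  qed
  have lists: "\<forall>u. u \<noteq> x \<and> \<not> adj 2 (gr n r) x u \<and> \<not> adj 2 (gr n r') x u \<longrightarrow> (\<forall>i. gr n r u i = gr n r' u i)"
  proof (intro allI impI)
    fix u i assume h: "u \<noteq> x \<and> \<not> adj 2 (gr n r) x u \<and> \<not> adj 2 (gr n r') x u"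
    have "u \<noteq> y" using h E D V gr_adj[OF r] by auto
    moreover have "u \<noteq> w" using h E D V gr_adj[OF r] by auto
    ultimately have ru: "r' u = r u" using v1 h by auto
    obtain t where t: "r t = u" using pf(3) by metis
    have "t \<noteq> x" "t \<noteq> w" using t E h \<open>u \<noteq> y\<close> by auto
    then have "r' t = u" using v1 t by auto
    then have "inv r' u = inv r u" using t pf(5) pf'(5) by metis
    then show "gr n r u i = gr n r' u i" using gr_local[OF r r'] ru by metis
  qed
  show ?thesis unfolding neighbouring_def r'_def[symmetric]
    apply (rule conjI[OF ne])
    apply (rule bexI[OF _ V(1)])
    using adjc lists by (rule conjI)
qed

lemma nb_attach:
  assumes r: "r permutes {1..n}" and V: "z \<in> {1..n}" "y \<in> {1..n}" "w \<in> {1..n}"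
    and D: "z \<noteq> y" "y \<noteq> w" "z \<noteq> w" and E: "r z = z" "r y = w" "r w = y"
  shows "neighbouring 2 n (gr n r) (gr n (r \<circ> tr z w))"
proof -
  define r' where "r' = r \<circ> tr z w"
  have r': "r' permutes {1..n}" unfolding r'_def
    by (rule permutes_compose[OF permutes_swap_id[OF V(1) V(3)] r])
  have v1: "r' z = y" "r' w = z" "\<And>u. u \<noteq> z \<Longrightarrow> u \<noteq> w \<Longrightarrow> r' u = r u"
    using E by (auto simp: r'_def)
  note pf = perm_facts[OF r] and pf' = perm_facts[OF r']
  have ne: "gr n r \<noteq> gr n r'"
  proof
    assume h: "gr n r = gr n r'"
    have "r' (r' z) \<noteq> z" using v1 E D by auto
    then have "gr n r' z 2 = y" using v1 D V by (auto simp: gr_def)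
    moreover have "gr n r z 2 = 0" using E by (auto simp: gr_def)
    ultimately show False using h D V by auto
  qed
  have adjc: "\<forall>u u'. u \<noteq> z \<and> u' \<noteq> z \<longrightarrow> (adj 2 (gr n r) u u' \<longleftrightarrow> adj 2 (gr n r') u u')"
  proof (intro allI impI)
    fix u u' assume h: "u \<noteq> z \<and> u' \<noteq> z"
    have "(u' = r u \<or> r u' = u) \<longleftrightarrow> (u' = r' u \<or> r' u' = u)"
    proof (cases "u = w")
      case True
      have "r u' = w \<longleftrightarrow> u' = y" using pf(6)[of u' y] E by simp
      moreover have "r' u' = w \<longleftrightarrow> u' = y"
      proof (cases "u' = w")
        case True then show ?thesis using v1 D by auto
      next
        case False
        then have "r' u' = r u'" using v1 h by auto
        then show ?thesis using pf(6)[of u' y] E by simp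
      qed
      ultimately show ?thesis using True E v1 h by auto
    next
      case False
      then have ru: "r' u = r u" using v1 h by auto
      show ?thesis
      proof (cases "u' = w")
        case True
        have l: "(u' = r u \<or> r u' = u) \<longleftrightarrow> (w = r u)" using True E(2,3) by auto
        have r: "(u' = r' u \<or> r' u' = u) \<longleftrightarrow> (w = r u)" using True ru v1(2) h by auto
        show ?thesis using l r by simp
      next
        case False
        then show ?thesis using ru v1 h by auto
      qed
    qed
    then show "adj 2 (gr n r) u u' \<longleftrightarrow> adj 2 (gr n r') u u'"
      using gr_adj[OF r] gr_adj[OF r'] by auto
  qed
  have lists: "\<forall>u. u \<noteq> z \<and> \<not> adj 2 (gr n r) z u \<and> \<not> adj 2 (gr n r') z u \<longrightarrow> (\<forall>i. gr n r u i = gr n r' u i)"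
  proof (intro allI impI)
    fix u i assume h: "u \<noteq> z \<and> \<not> adj 2 (gr n r) z u \<and> \<not> adj 2 (gr n r') z u"
    have "u \<noteq> y" using h v1 D V gr_adj[OF r'] by auto
    moreover have "u \<noteq> w" using h v1 D V gr_adj[OF r'] by auto
    ultimately have ru: "r' u = r u" using v1 h by auto
    obtain t where t: "r t = u" using pf(3) by metis
    have "t \<noteq> z" "t \<noteq> w" using t E h \<open>u \<noteq> y\<close> by auto
    then have "r' t = u" using v1 t by auto
    then have "inv r' u = inv r u" using t pf(5) pf'(5) by metis
    then show "gr n r u i = gr n r' u i" using gr_local[OF r r'] ru by metis
  qed
  show ?thesis unfolding neighbouring_def r'_def[symmetric]
    apply (rule conjI[OF ne])
    apply (rule bexI[OF _ V(1)])
    using adjc lists by (rule conjI)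
qed

definition mB :: "nat \<Rightarrow> nat" where "mB n = (n - 1) div 3"

definition piB :: "nat \<Rightarrow> nat \<Rightarrow> nat" where
  "piB n k = (if 1 \<le> k \<and> k \<le> 3 * mB n then (if k mod 3 = 0 then k - 2 else k + 1) else k)"
definition piBi :: "nat \<Rightarrow> nat \<Rightarrow> nat" where
  "piBi n k = (if 1 \<le> k \<and> k \<le> 3 * mB n then (if k mod 3 = 1 then k + 2 else k - 1) else k)"
definition piA :: "nat \<Rightarrow> nat \<Rightarrow> nat" where
  "piA n k = (if 1 \<le> k \<and> k < n then k + 1 else if k = n then 1 else k)"
definition piAi :: "nat \<Rightarrow> nat \<Rightarrow> nat" where
  "piAi n k = (if 1 < k \<and> k \<le> n then k - 1 else if k = 1 then n else k)"

lemma mB_lt: "1 \<le> n \<Longrightarrow> 3 * mB n < n"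
  unfolding mB_def by linarith

lemma piB_ev: assumes "q < mB n"
  shows "piB n (3*q+1) = 3*q+2" "piB n (3*q+2) = 3*q+3" "piB n (3*q+3) = 3*q+1"
   "piBi n (3*q+1) = 3*q+3" "piBi n (3*q+2) = 3*q+1" "piBi n (3*q+3) = 3*q+2"
  using assms unfolding piB_def piBi_def by (simp_all add: mod_Suc)
lemma piB_out: "k = 0 \<or> 3 * mB n < k \<Longrightarrow> piB n k = k \<and> piBi n k = k"
  unfolding piB_def piBi_def by auto
lemma blk_cases:
  obtains (out) "k = 0 \<or> 3 * mB n < k" | (a) q where "q < mB n" "k = 3*q+1"
    | (b) q where "q < mB n" "k = 3*q+2" | (c) q where "q < mB n" "k = 3*q+3"
proof -
  consider "k = 0 \<or> 3 * mB n < k" | "1 \<le> k \<and> k \<le> 3 * mB n" by linarith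
  then show ?thesis
  proof cases
    case 1 then show ?thesis using out by blast
  next
    case 2
    define q where "q = (k - 1) div 3"
    have k: "k = 3 * q + (k - 1) mod 3 + 1" using 2 unfolding q_def by simp
    have "(k - 1) mod 3 < 3" by simp
    have qm: "q < mB n" using 2 unfolding q_def by linarith
    consider "(k - 1) mod 3 = 0" | "(k - 1) mod 3 = 1" | "(k - 1) mod 3 = 2" by linarith
    then show ?thesis using k qm a b c by (cases; simp)
  qed
qed
lemma piB_l: "piBi n (piB n k) = k"
proof (cases rule: blk_cases[of k n])
  case out then show ?thesis using piB_out by simp
next
  case (a q) then show ?thesis using piB_ev[OF a(1)] by simp
next
  case (b q) then show ?thesis using piB_ev[OF b(1)] by simp
next
  case (c q) then show ?thesis using piB_ev[OF c(1)] by simp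
qed

lemma piB_r: "piB n (piBi n k) = k"
proof (cases rule: blk_cases[of k n])
  case out then show ?thesis using piB_out by simp
next
  case (a q) then show ?thesis using piB_ev[OF a(1)] by simp
next
  case (b q) then show ?thesis using piB_ev[OF b(1)] by simp
next
  case (c q) then show ?thesis using piB_ev[OF c(1)] by simp
qed

lemma piB_in: assumes "1 \<le> n" "k \<in> {1..n}" shows "piB n k \<in> {1..n} \<and> piBi n k \<in> {1..n}"
proof (cases rule: blk_cases[of k n])
  case out then show ?thesis using piB_out[of k n] assms by simp
next
  case (a q) then show ?thesis using piB_ev[OF a(1)] mB_lt[of n] assms by simp
next
  case (b q) then show ?thesis using piB_ev[OF b(1)] mB_lt[of n] assms by simp
next
  case (c q) then show ?thesis using piB_ev[OF c(1)] mB_lt[of n] assms by simp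
qed

lemma piB_ne: "1 \<le> k \<Longrightarrow> k \<le> 3 * mB n \<Longrightarrow> piB n k \<noteq> k \<and> piB n (piB n k) \<noteq> k"
proof (cases rule: blk_cases[of k n])
  case out then show "1 \<le> k \<Longrightarrow> k \<le> 3 * mB n \<Longrightarrow> ?thesis" by simp
next
  case (a q) then show ?thesis using piB_ev[OF a(1)] by simp
next
  case (b q) then show ?thesis using piB_ev[OF b(1)] by simp
next
  case (c q) then show ?thesis using piB_ev[OF c(1)] by simp
qed

lemma piB_perm: assumes "1 \<le> n" shows "piB n permutes {1..n}"
proof (rule bij_imp_permutes)
  show "bij_betw (piB n) {1..n} {1..n}"
    by (rule bij_betw_byWitness[where f'="piBi n"])
       (use piB_l piB_r piB_in[OF assms] in auto)
  show "\<And>x. x \<notin> {1..n} \<Longrightarrow> piB n x = x"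
    using mB_lt[OF assms] unfolding piB_def by auto
qed

lemma piB_inv: assumes "1 \<le> n" shows "inv (piB n) k = piBi n k"
  using permutes_inv_eq[OF piB_perm[OF assms]] piB_r by metis

lemma piA_l: "1 \<le> n \<Longrightarrow> piAi n (piA n k) = k"
  unfolding piA_def piAi_def by auto
lemma piA_r: "1 \<le> n \<Longrightarrow> piA n (piAi n k) = k"
  unfolding piA_def piAi_def by auto
lemma piA_in: "k \<in> {1..n} \<Longrightarrow> piA n k \<in> {1..n}"
  unfolding piA_def by (simp split: if_splits)
lemma piAi_in: "k \<in> {1..n} \<Longrightarrow> piAi n k \<in> {1..n}"
  unfolding piAi_def by (cases "k = 1") auto

lemma piA_perm: assumes "1 \<le> n" shows "piA n permutes {1..n}"
proof (rule bij_imp_permutes)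
  show "bij_betw (piA n) {1..n} {1..n}"
    by (rule bij_betw_byWitness[where f'="piAi n"])
       (use piA_l[OF assms] piA_r[OF assms] piA_in piAi_in in auto)
  show "\<And>x. x \<notin> {1..n} \<Longrightarrow> piA n x = x"
    using assms unfolding piA_def by auto
qed

lemma piA_inv: assumes "1 \<le> n" shows "inv (piA n) k = piAi n k"
  using permutes_inv_eq[OF piA_perm[OF assms]] piA_r[OF assms] by metis

definition cj :: "(nat \<Rightarrow> nat) \<Rightarrow> (nat \<Rightarrow> nat) \<Rightarrow> nat \<Rightarrow> nat" where
  "cj s p = s \<circ> p \<circ> inv s"

lemma cj_perm: "s permutes S \<Longrightarrow> p permutes S \<Longrightarrow> cj s p permutes S"
  unfolding cj_def by (intro permutes_compose permutes_inv) auto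

lemma cj_app: "s permutes S \<Longrightarrow> cj s p (s k) = s (p k)"
  unfolding cj_def using permutes_inverses(2) by fastforce

lemma cj_inv_app: assumes "s permutes S" "p permutes S" shows "inv (cj s p) (s k) = s (inv p k)"
proof -
  have "cj s p (s (inv p k)) = s k" using cj_app[OF assms(1)] permutes_inverses(1)[OF assms(2)] by simp
  then show ?thesis using permutes_inv_eq[OF cj_perm[OF assms]] by metis
qed

definition Bg :: "nat \<Rightarrow> (nat \<Rightarrow> nat) \<Rightarrow> inc_fun" where "Bg n s = gr n (cj s (piB n))"
definition Ag :: "nat \<Rightarrow> (nat \<Rightarrow> nat) \<Rightarrow> inc_fun" where "Ag n s = gr n (cj s (piA n))"

lemma Bg_tri:
  assumes n: "1 \<le> n" and s: "s permutes {1..n}" and k: "1 \<le> k" "k \<le> 3 * mB n"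
  shows "Bg n s (s k) 1 = s (piBi n k)" "Bg n s (s k) 2 = s (piB n k)"
proof -
  let ?r = "cj s (piB n)"
  have r: "?r permutes {1..n}" using cj_perm[OF s piB_perm[OF n]] .
  have sk: "s k \<in> {1..n}" using k mB_lt[OF n] permutes_in_image[OF s] by auto
  have e1: "?r (s k) = s (piB n k)" using cj_app[OF s] .
  have e2: "?r (?r (s k)) = s (piB n (piB n k))" using cj_app[OF s] by simp
  have e3: "inv ?r (s k) = s (piBi n k)" using cj_inv_app[OF s piB_perm[OF n]] piB_inv[OF n] by simp
  have inj: "\<And>a b. s a = s b \<longleftrightarrow> a = b" using perm_facts(6)[OF s] by blast
  have ne1: "piB n k \<noteq> k" using piB_ne k by blast
  have ne2: "piB n (piB n k) \<noteq> k" using piB_ne k by blast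
  show "Bg n s (s k) 1 = s (piBi n k)" "Bg n s (s k) 2 = s (piB n k)"
    unfolding Bg_def gr_def using sk e1 e2 e3 ne1 ne2 inj by auto
qed

lemma Bg_z:
  assumes n: "1 \<le> n" and s: "s permutes {1..n}" and k: "3 * mB n < k"
  shows "Bg n s (s k) i = 0"
proof -
  have "piB n k = k" using k unfolding piB_def by auto
  then show ?thesis unfolding Bg_def gr_def using cj_app[OF s, of "piB n" k] by auto
qed

definition cnt :: "inc_fun \<Rightarrow> inc_fun \<Rightarrow> nat \<Rightarrow> nat" where
  "cnt f g v = (if f v 1 \<noteq> g v 1 then 1 else 0) + (if f v 2 \<noteq> g v 2 then 1 else 0)"

lemma sym_other:
  assumes g: "valid_graph 2 n g" and u: "u \<in> {1..n}" and i: "i \<in> {1..2}" and e: "g u i = v" and v0: "v \<noteq> 0"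
  shows "g v 1 = u \<or> g v 2 = u"
proof -
  have "\<exists>j\<in>{1..2}. g (g u i) j = u" using g u i e v0 unfolding valid_graph_def by blast
  then obtain j where "j \<in> {1..(2::nat)}" "g v j = u" using e by blast
  moreover have "j = 1 \<or> j = 2" using calculation(1) by auto
  ultimately show ?thesis by auto
qed

lemma tri_mismatch:
  assumes g: "valid_graph 2 n g" and cg: "connected_graph 2 n g"
    and V: "a \<in> {1..n}" "b \<in> {1..n}" "c \<in> {1..n}" and D: "a \<noteq> b" "b \<noteq> c" "a \<noteq> c" and n4: "4 \<le> n"
    and f: "f a 1 = c" "f a 2 = b" "f b 1 = a" "f b 2 = c" "f c 1 = b" "f c 2 = a"
  shows "2 \<le> cnt f g a + cnt f g b + cnt f g c"
proof (rule ccontr)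
  assume h: "\<not> 2 \<le> cnt f g a + cnt f g b + cnt f g c"
  have one: "1 \<in> {1..(2::nat)}" and two: "2 \<in> {1..(2::nat)}" by auto
  have s6: "g c 2 = a \<Longrightarrow> g a 1 = c \<or> g a 2 = c" using sym_other[OF g V(3) two] V by auto
  have s3: "g b 1 = a \<Longrightarrow> g a 1 = b \<or> g a 2 = b" using sym_other[OF g V(2) one] V by auto
  have s2: "g a 2 = b \<Longrightarrow> g b 1 = a \<or> g b 2 = a" using sym_other[OF g V(1) two] V by auto
  have s5: "g c 1 = b \<Longrightarrow> g b 1 = c \<or> g b 2 = c" using sym_other[OF g V(3) one] V by auto
  have s4: "g b 2 = c \<Longrightarrow> g c 1 = b \<or> g c 2 = b" using sym_other[OF g V(2) two] V by auto
  have s1: "g a 1 = c \<Longrightarrow> g c 1 = a \<or> g c 2 = a" using sym_other[OF g V(1) one] V by auto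
  have all: "g a 1 = c \<and> g a 2 = b \<and> g b 1 = a \<and> g b 2 = c \<and> g c 1 = b \<and> g c 2 = a"
    using h f s1 s2 s3 s4 s5 s6 D unfolding cnt_def by (auto split: if_splits)
  have z: "\<And>v i. i \<notin> {1..2} \<Longrightarrow> g v i = 0" using g unfolding valid_graph_def by blast
  have cl: "\<And>u w. u \<in> {a,b,c} \<Longrightarrow> adj 2 g u w \<Longrightarrow> w \<in> {a,b,c}"
  proof -
    fix u w assume u: "u \<in> {a,b,c}" and ad: "adj 2 g u w"
    then obtain i where i: "i \<in> {1..(2::nat)}" "g u i = w" unfolding adj_def by blast
    have "i = 1 \<or> i = 2" using i(1) by auto
    then show "w \<in> {a,b,c}" using u i(2) all by auto
  qed
  have reach: "\<And>w. (adj 2 g)\<^sup>*\<^sup>* a w \<Longrightarrow> w \<in> {a,b,c}"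
  proof -
    fix w assume "(adj 2 g)\<^sup>*\<^sup>* a w"
    then show "w \<in> {a,b,c}"
    proof (induction rule: rtranclp_induct)
      case base then show ?case by simp
    next
      case (step y z) then show ?case using cl by blast
    qed
  qed
  have "\<not> {1..n} \<subseteq> {a,b,c}"
  proof
    assume "{1..n} \<subseteq> {a,b,c}"
    then have "card {1..n} \<le> card {a,b,c}" by (intro card_mono) auto
    moreover have "card {a,b,c} = 3" using D by simp
    ultimately show False using n4 by simp
  qed
  then obtain w where w: "w \<in> {1..n}" "w \<notin> {a,b,c}" by blast
  have "(adj 2 g)\<^sup>*\<^sup>* a w" using cg V w unfolding connected_graph_def by blast
  then show False using reach w by blast
qed

lemma iso_mismatch:
  assumes g: "valid_graph 2 n g" and cg: "connected_graph 2 n g" and n: "2 \<le> n" and z: "z \<in> {1..n}"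
  shows "g z 1 \<noteq> 0"
proof
  assume g0: "g z 1 = 0"
  define w where "w = (if z = 1 then 2 else (1::nat))"
  have w: "w \<in> {1..n}" "w \<noteq> z" using n z unfolding w_def by auto
  have "(adj 2 g)\<^sup>*\<^sup>* z w" using cg z w unfolding connected_graph_def by blast
  then obtain w' where "adj 2 g z w'" using w(2) by (metis converse_rtranclpE)
  then obtain i where i: "i \<in> {1..(2::nat)}" "g z i = w'" "w' \<noteq> 0" unfolding adj_def by blast
  have zc: "\<forall>v\<in>{1..n}. \<forall>i\<in>{1..2}. \<forall>j\<in>{1..2}. i \<le> j \<and> g v i = 0 \<longrightarrow> g v j = 0"
    using g unfolding valid_graph_def by blast
  have "(1::nat) \<in> {1..2}" "1 \<le> i" using i(1) by auto
  then have "g z i = 0" using zc z i(1) g0 by blast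
  then show False using i by simp
qed

lemma sum3: "(\<Sum>k\<in>{1..3*m}. h k) = (\<Sum>q<m. h (3*q+1) + h (3*q+2) + h (3*q+3))" for m :: nat and h :: "nat \<Rightarrow> nat"
proof (induction m)
  case 0 then show ?case by simp
next
  case (Suc m)
  have e: "{1..3 * Suc m} = {1..3*m} \<union> {3*m+1, 3*m+2, 3*m+3}" by auto
  have "(\<Sum>k\<in>{1..3 * Suc m}. h k) = (\<Sum>k\<in>{1..3*m}. h k) + (\<Sum>k\<in>{3*m+1, 3*m+2, 3*m+3}. h k)"
    unfolding e by (rule sum.union_disjoint) auto
  also have "(\<Sum>k\<in>{3*m+1, 3*m+2, 3*m+3}. h k) = h (3*m+1) + h (3*m+2) + h (3*m+3)" by simp
  finally show ?case using Suc by simp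
qed

lemma card12: "card {i \<in> {1..(2::nat)}. P i} = (if P 1 then 1 else 0) + (if P 2 then 1 else 0)"
proof -
  have e: "{1..(2::nat)} = {1,2}" by auto
  have "card {i \<in> {1,(2::nat)}. P i} = (if P 1 then 1 else 0) + (if P 2 then 1 else 0)"
  proof (cases "P 1"; cases "P 2")
    assume "P 1" "P 2"
    then have "{i \<in> {1,(2::nat)}. P i} = {1,2}" by auto
    then show ?thesis using \<open>P 1\<close> \<open>P 2\<close> by simp
  next
    assume "P 1" "\<not> P 2"
    then have "{i \<in> {1,(2::nat)}. P i} = {1}" by auto
    then show ?thesis using \<open>P 1\<close> \<open>\<not> P 2\<close> by simp
  next
    assume "\<not> P 1" "P 2"
    then have "{i \<in> {1,(2::nat)}. P i} = {2}" by auto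
    then show ?thesis using \<open>\<not> P 1\<close> \<open>P 2\<close> by simp
  next
    assume "\<not> P 1" "\<not> P 2"
    then have "{i \<in> {1,(2::nat)}. P i} = {}" by auto
    then show ?thesis using \<open>\<not> P 1\<close> \<open>\<not> P 2\<close> by simp
  qed
  then show ?thesis unfolding e .
qed

lemma card_mis:
  assumes s: "s permutes {1..n}"
  shows "card {(v, i). v \<in> {1..n} \<and> i \<in> {1..2} \<and> f v i \<noteq> g v i} = (\<Sum>k\<in>{1..n}. cnt f g (s k))"
proof -
  have Meq: "{(v, i). v \<in> {1..n} \<and> i \<in> {1..2} \<and> f v i \<noteq> g v i} = Sigma {1..n} (\<lambda>v. {i \<in> {1..2}. f v i \<noteq> g v i})" by auto
  have "card (Sigma {1..n} (\<lambda>v. {i \<in> {1..(2::nat)}. f v i \<noteq> g v i})) = (\<Sum>v\<in>{1..n}. card {i \<in> {1..(2::nat)}. f v i \<noteq> g v i})"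
    by (rule card_SigmaI) auto
  also have "\<dots> = (\<Sum>v\<in>{1..n}. cnt f g v)" unfolding card12 cnt_def by simp
  also have "\<dots> = (\<Sum>k\<in>{1..n}. cnt f g (s k))"
    by (subst sum.permute[OF s]) (simp add: comp_def)
  finally show ?thesis using Meq by simp
qed

lemma far_Bg:
  assumes n: "4 \<le> n" and s: "s permutes {1..n}"
  shows "far 2 n (1/3) (Bg n s)"
  unfolding far_def
proof (intro allI impI)
  fix g assume gP: "in_P 2 n g"
  have g: "valid_graph 2 n g" and cg: "connected_graph 2 n g" using gP unfolding in_P_def by auto
  let ?f = "Bg n s" and ?m = "mB n"
  have n1: "1 \<le> n" using n by simp
  have m3: "3 * ?m < n" using mB_lt[OF n1] .
  let ?M = "{(v, i). v \<in> {1..n} \<and> i \<in> {1..2} \<and> ?f v i \<noteq> g v i}"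
  have cM: "card ?M = (\<Sum>k\<in>{1..n}. cnt ?f g (s k))" by (rule card_mis[OF s])
  have spl: "{1..n} = {1..3*?m} \<union> {3*?m+1..n}" using m3 by auto
  have cM2: "card ?M = (\<Sum>k\<in>{1..3*?m}. cnt ?f g (s k)) + (\<Sum>k\<in>{3*?m+1..n}. cnt ?f g (s k))"
  proof -
    have "(\<Sum>k\<in>{1..n}. cnt ?f g (s k)) = (\<Sum>k\<in>{1..3*?m}. cnt ?f g (s k)) + (\<Sum>k\<in>{3*?m+1..n}. cnt ?f g (s k))"
      by (subst spl, rule sum.union_disjoint) auto
    then show ?thesis using cM by simp
  qed
  have inj: "\<And>a b. s a = s b \<longleftrightarrow> a = b" using perm_facts(6)[OF s] by blast
  have inV: "\<And>k. k \<in> {1..n} \<Longrightarrow> s k \<in> {1..n}" using perm_facts(1)[OF s] by blast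
  have T: "2 * ?m \<le> (\<Sum>k\<in>{1..3*?m}. cnt ?f g (s k))"
  proof -
    have "\<And>q. q < ?m \<Longrightarrow> 2 \<le> cnt ?f g (s (3*q+1)) + cnt ?f g (s (3*q+2)) + cnt ?f g (s (3*q+3))"
    proof -
      fix q assume q: "q < ?m"
      have k: "3*q+1 \<le> 3*?m" "3*q+2 \<le> 3*?m" "3*q+3 \<le> 3*?m" using q by auto
      note ev = piB_ev[OF q]
      show "2 \<le> cnt ?f g (s (3*q+1)) + cnt ?f g (s (3*q+2)) + cnt ?f g (s (3*q+3))"
      proof (rule tri_mismatch[OF g cg])
        show "s (3*q+1) \<in> {1..n}" "s (3*q+2) \<in> {1..n}" "s (3*q+3) \<in> {1..n}" using k m3 inV by auto
        show "s (3*q+1) \<noteq> s (3*q+2)" "s (3*q+2) \<noteq> s (3*q+3)" "s (3*q+1) \<noteq> s (3*q+3)" using inj by auto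
        show "4 \<le> n" by (rule n)
        show "?f (s (3*q+1)) 1 = s (3*q+3)" "?f (s (3*q+1)) 2 = s (3*q+2)"
          using Bg_tri[OF n1 s, of "3*q+1"] k ev by auto
        show "?f (s (3*q+2)) 1 = s (3*q+1)" "?f (s (3*q+2)) 2 = s (3*q+3)"
          using Bg_tri[OF n1 s, of "3*q+2"] k ev by auto
        show "?f (s (3*q+3)) 1 = s (3*q+2)" "?f (s (3*q+3)) 2 = s (3*q+1)"
          using Bg_tri[OF n1 s, of "3*q+3"] k ev by auto
      qed
    qed
    then have "(\<Sum>q<?m. (2::nat)) \<le> (\<Sum>q<?m. cnt ?f g (s (3*q+1)) + cnt ?f g (s (3*q+2)) + cnt ?f g (s (3*q+3)))"
      by (intro sum_mono) auto
    then show ?thesis unfolding sum3 by simp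
  qed
  have Z: "n - 3 * ?m \<le> (\<Sum>k\<in>{3*?m+1..n}. cnt ?f g (s k))"
  proof -
    have "\<And>k. k \<in> {3*?m+1..n} \<Longrightarrow> 1 \<le> cnt ?f g (s k)"
    proof -
      fix k assume k: "k \<in> {3*?m+1..n}"
      have "?f (s k) 1 = 0" using Bg_z[OF n1 s] k by auto
      moreover have "g (s k) 1 \<noteq> 0" using iso_mismatch[OF g cg] n k inV by auto
      ultimately show "1 \<le> cnt ?f g (s k)" unfolding cnt_def by auto
    qed
    then have "(\<Sum>k\<in>{3*?m+1..n}. (1::nat)) \<le> (\<Sum>k\<in>{3*?m+1..n}. cnt ?f g (s k))"
      by (intro sum_mono) auto
    then show ?thesis by simp
  qed
  have "2 * ?m + (n - 3 * ?m) \<le> card ?M" using cM2 T Z by linarith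
  then have "real (2 * ?m + (n - 3 * ?m)) \<le> real (card ?M)" by linarith
  moreover have "real (2 * ?m + (n - 3 * ?m)) = 2 * real ?m + real n - 3 * real ?m" using m3 by auto
  ultimately have c: "real n - real ?m \<le> real (card ?M)" by linarith
  have "1/3 < real (card ?M) / real (2 * n)"
    using c m3 n by (simp add: field_simps)
  then show "1/3 < dist_d 2 n (Bg n s) g" unfolding dist_d_def by simp
qed

lemma inP_Ag:
  assumes n: "3 \<le> n" and s: "s permutes {1..n}"
  shows "in_P 2 n (Ag n s)"
proof -
  have n1: "1 \<le> n" using n by simp
  let ?r = "cj s (piA n)"
  have r: "?r permutes {1..n}" using cj_perm[OF s piA_perm[OF n1]] .
  have inj: "\<And>a b. s a = s b \<longleftrightarrow> a = b" using perm_facts(6)[OF s] by blast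
  have inV: "\<And>k. k \<in> {1..n} \<Longrightarrow> s k \<in> {1..n}" using perm_facts(1)[OF s] by blast
  have step: "\<And>k. k \<in> {1..n} \<Longrightarrow> adj 2 (Ag n s) (s k) (s (piA n k))"
  proof -
    fix k assume k: "k \<in> {1..n}"
    have "piA n k \<noteq> k" using k n unfolding piA_def by auto
    then have "s (piA n k) \<noteq> s k" using inj by auto
    then show "adj 2 (Ag n s) (s k) (s (piA n k))"
      unfolding Ag_def using gr_adj[OF r] inV[OF k] cj_app[OF s] by auto
  qed
  have fwd: "\<And>k d. k \<in> {1..n} \<Longrightarrow> k + d \<le> n \<Longrightarrow> (adj 2 (Ag n s))\<^sup>*\<^sup>* (s k) (s (k + d))"
  proof -
    fix k d assume k: "k \<in> {1..n}" and kd: "k + d \<le> n"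
    then show "(adj 2 (Ag n s))\<^sup>*\<^sup>* (s k) (s (k + d))"
    proof (induction d)
      case 0 then show ?case by simp
    next
      case (Suc d)
      then have IH: "(adj 2 (Ag n s))\<^sup>*\<^sup>* (s k) (s (k + d))" by simp
      have "k + d \<in> {1..n}" "k + d < n" using Suc.prems by auto
      then have "adj 2 (Ag n s) (s (k + d)) (s (k + Suc d))"
        using step[of "k + d"] unfolding piA_def by auto
      then show ?case by (rule rtranclp.rtrancl_into_rtrancl[OF IH])
    qed
  qed
  have conn: "connected_graph 2 n (Ag n s)"
    unfolding connected_graph_def
  proof (intro ballI)
    fix u w assume u: "u \<in> {1..n}" and w: "w \<in> {1..n}"
    obtain k where k: "k \<in> {1..n}" "u = s k" using u perm_facts(2,3)[OF s] by metis
    obtain j where j: "j \<in> {1..n}" "w = s j" using w perm_facts(2,3)[OF s] by metis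
    show "(adj 2 (Ag n s))\<^sup>*\<^sup>* u w"
    proof (cases "k \<le> j")
      case True
      then show ?thesis using fwd[OF k(1), of "j - k"] k j by auto
    next
      case False
      have a: "(adj 2 (Ag n s))\<^sup>*\<^sup>* (s k) (s n)" using fwd[OF k(1), of "n - k"] k by auto
      have b: "adj 2 (Ag n s) (s n) (s 1)" using step[of n] n1 unfolding piA_def by auto
      have c: "(adj 2 (Ag n s))\<^sup>*\<^sup>* (s 1) (s j)" using fwd[of 1 "j - 1"] j n1 by auto
      show ?thesis using a b c k j
        by (meson rtranclp.rtrancl_into_rtrancl rtranclp_trans)
    qed
  qed
  show ?thesis unfolding in_P_def Ag_def using gr_valid[OF r] conn unfolding Ag_def by auto
qed

definition PV :: "qtree \<Rightarrow> inc_fun \<Rightarrow> nat set" where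
  "PV t f = {v. \<exists>i. (v, i) \<in> set (fst (run t f))}"

lemma run_local:
  "(\<forall>p\<in>set (fst (run t f)). f (fst p) (snd p) = g (fst p) (snd p)) \<Longrightarrow> run t g = run t f"
proof (induction t)
  case (Leaf b) then show ?case by simp
next
  case (Probe v i k)
  have e: "f v i = g v i" using Probe.prems by (simp add: Let_def)
  have "\<forall>p\<in>set (fst (run (k (f v i)) f)). f (fst p) (snd p) = g (fst p) (snd p)"
    using Probe.prems by (simp add: Let_def)
  then have "run (k (f v i)) g = run (k (f v i)) f" using Probe.IH by blast
  then show ?case using e by (simp add: Let_def)
qed

lemma run_local2: "(\<forall>v\<in>PV t f. \<forall>i. f v i = g v i) \<Longrightarrow> run t g = run t f"
  by (rule run_local) (auto simp: PV_def)

lemma PV_card: "card (PV t f) \<le> num_probes t f"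
proof -
  have "PV t f = fst ` set (fst (run t f))" unfolding PV_def by force
  then have "card (PV t f) \<le> card (set (fst (run t f)))" by (simp add: card_image_le)
  also have "\<dots> \<le> length (fst (run t f))" by (rule card_length)
  finally show ?thesis unfolding num_probes_def .
qed

lemma PV_finite: "finite (PV t f)"
proof -
  have "PV t f = fst ` set (fst (run t f))" unfolding PV_def by force
  then show ?thesis by simp
qed

definition mt :: "(nat \<times> nat) set \<Rightarrow> bool" where
  "mt M \<longleftrightarrow> (\<forall>a b c d. (a, b) \<in> M \<longrightarrow> (c, d) \<in> M \<longrightarrow> (a = c \<or> a = d \<or> b = c \<or> b = d) \<longrightarrow> a = c \<and> b = d)
     \<and> (\<forall>a b. (a, b) \<in> M \<longrightarrow> a \<noteq> b)"

definition mswap :: "(nat \<times> nat) set \<Rightarrow> nat \<Rightarrow> nat" where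
  "mswap M x = (if \<exists>y. (x, y) \<in> M then (THE y. (x, y) \<in> M)
                else if \<exists>y. (y, x) \<in> M then (THE y. (y, x) \<in> M) else x)"

lemma mswap_pair:
  assumes m: "mt M" and ab: "(a, b) \<in> M"
  shows "mswap M a = b" "mswap M b = a"
proof -
  have u1: "\<And>y. (a, y) \<in> M \<Longrightarrow> y = b" using m ab unfolding mt_def by blast
  have "(THE y. (a, y) \<in> M) = b" using ab u1 by blast
  then show "mswap M a = b" unfolding mswap_def using ab by auto
  have n1: "\<And>y. (b, y) \<notin> M" using m ab unfolding mt_def by metis
  have u2: "\<And>y. (y, b) \<in> M \<Longrightarrow> y = a" using m ab unfolding mt_def by blast
  have "(THE y. (y, b) \<in> M) = a" using ab u2 by blast
  then show "mswap M b = a" unfolding mswap_def using ab n1 by auto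
qed

lemma mswap_fix: "(\<And>y. (x, y) \<notin> M \<and> (y, x) \<notin> M) \<Longrightarrow> mswap M x = x"
  unfolding mswap_def by auto

lemma mswap_invol:
  assumes m: "mt M" shows "mswap M (mswap M x) = x"
proof (cases "\<exists>y. (x, y) \<in> M \<or> (y, x) \<in> M")
  case True
  then obtain y where "(x, y) \<in> M \<or> (y, x) \<in> M" by blast
  then show ?thesis using mswap_pair[OF m] by metis
next
  case False
  then show ?thesis using mswap_fix by metis
qed

lemma mswap_perm:
  assumes m: "mt M" and S: "\<And>a b. (a, b) \<in> M \<Longrightarrow> a \<in> S \<and> b \<in> S"
  shows "mswap M permutes S"
proof (rule bij_imp_permutes)
  have inS: "\<And>x. x \<in> S \<Longrightarrow> mswap M x \<in> S"
  proof -
    fix x assume x: "x \<in> S"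
    show "mswap M x \<in> S"
    proof (cases "\<exists>y. (x, y) \<in> M \<or> (y, x) \<in> M")
      case True
      then obtain y where "(x, y) \<in> M \<or> (y, x) \<in> M" by blast
      then show ?thesis using mswap_pair[OF m] S by metis
    next
      case False
      then show ?thesis using mswap_fix x by metis
    qed
  qed
  show "bij_betw (mswap M) S S"
    by (rule bij_betw_byWitness[where f'="mswap M"]) (use mswap_invol[OF m] inS in auto)
  show "\<And>x. x \<notin> S \<Longrightarrow> mswap M x = x"
    by (rule mswap_fix) (use S in blast)
qed

definition off :: "nat \<Rightarrow> nat" where "off k = (k - 1) mod 3"
definition bl :: "nat \<Rightarrow> nat" where "bl k = (k - 1) div 3"
definition pr :: "nat \<Rightarrow> nat \<Rightarrow> nat \<times> nat" where
  "pr n k = (if off k = 0 then (piAi n k, k + 2) else (k - 2, k + 1))"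
definition Mt :: "nat \<Rightarrow> nat set \<Rightarrow> (nat \<times> nat) set" where
  "Mt n P = pr n ` {k \<in> P. off k \<noteq> 1}"
definition dl :: "nat \<Rightarrow> nat set \<Rightarrow> nat \<Rightarrow> nat" where "dl n P = mswap (Mt n P)"
definition cadj :: "nat \<Rightarrow> nat \<Rightarrow> nat \<Rightarrow> bool" where
  "cadj m q q' \<longleftrightarrow> q' = Suc q \<or> q = Suc q' \<or> (q = 0 \<and> q' = m - 1) \<or> (q' = 0 \<and> q = m - 1)"
definition goodP :: "nat \<Rightarrow> nat set \<Rightarrow> bool" where
  "goodP n P \<longleftrightarrow> P \<subseteq> {1..3 * mB n} \<and>
     (\<forall>k\<in>P. \<forall>k'\<in>P. k \<noteq> k' \<longrightarrow> bl k \<noteq> bl k' \<and> \<not> cadj (mB n) (bl k) (bl k'))"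
definition Rq :: "nat \<Rightarrow> nat \<Rightarrow> nat set" where
  "Rq n q = {(if q = 0 then n else 3*q), 3*q+1, 3*q+2, 3*q+3, 3*q+4}"

lemma n_form: "1 \<le> n \<Longrightarrow> \<exists>r<3. n = 3 * mB n + 1 + r"
  unfolding mB_def by (intro exI[of _ "(n - 1) mod 3"]) auto

lemma dec: "k \<in> {1..3 * mB n} \<Longrightarrow> k = 3 * bl k + off k + 1 \<and> bl k < mB n \<and> off k < 3"
  unfolding bl_def off_def by auto

lemma Rq_disj:
  assumes n: "1 \<le> n" and m3: "3 \<le> mB n" and q: "q < mB n" "q' < mB n" "q \<noteq> q'"
    and na: "\<not> cadj (mB n) q q'"
  shows "Rq n q \<inter> Rq n q' = {}"
proof -
  obtain r where r: "r < 3" "n = 3 * mB n + 1 + r" using n_form[OF n] by blast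
  show ?thesis using q na r m3 unfolding Rq_def cadj_def by (auto split: if_splits)
qed

lemma piA_ev: "1 \<le> n \<Longrightarrow> k \<in> {1..3 * mB n} \<Longrightarrow> piAi n k = (if k = 1 then n else k - 1) \<and> piA n k = k + 1"
  using mB_lt[of n] unfolding piAi_def piA_def by auto

lemma in_R:
  assumes n: "1 \<le> n" and k: "k \<in> {1..3 * mB n}"
  shows "piAi n k \<in> Rq n (bl k)" "k \<in> Rq n (bl k)" "piA n k \<in> Rq n (bl k)"
    "off k \<noteq> 1 \<Longrightarrow> fst (pr n k) \<in> Rq n (bl k) \<and> snd (pr n k) \<in> Rq n (bl k)"
proof -
  have d: "k = 3 * bl k + off k + 1" "off k < 3" using dec[OF k] by auto
  have e: "piAi n k = (if k = 1 then n else k - 1)" "piA n k = k + 1" using piA_ev[OF n k] by auto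
  consider "off k = 0" | "off k = 1" | "off k = 2" using d(2) by linarith
  note c = this
  show "piAi n k \<in> Rq n (bl k)" using c d e unfolding Rq_def by cases auto
  show "k \<in> Rq n (bl k)" using c d unfolding Rq_def by cases auto
  show "piA n k \<in> Rq n (bl k)" using c d e unfolding Rq_def by cases auto
  show "off k \<noteq> 1 \<Longrightarrow> fst (pr n k) \<in> Rq n (bl k) \<and> snd (pr n k) \<in> Rq n (bl k)"
    using c d e unfolding Rq_def pr_def by cases auto
qed

lemma dl_good:
  assumes n: "1 \<le> n" and m3: "3 \<le> mB n" and g: "goodP n P"
  shows "mt (Mt n P)"
    and "\<And>a b. (a, b) \<in> Mt n P \<Longrightarrow> a \<in> {1..n} \<and> b \<in> {1..n}"
    and "\<And>k. k \<in> P \<Longrightarrow> dl n P k = k"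
    and "\<And>k. k \<in> P \<Longrightarrow> dl n P (piAi n k) = piBi n k"
    and "\<And>k. k \<in> P \<Longrightarrow> dl n P (piA n k) = piB n k"
proof -
  have Psub: "P \<subseteq> {1..3 * mB n}" using g unfolding goodP_def by auto
  have m3n: "3 * mB n < n" using mB_lt[OF n] .
  have sep: "\<And>k k'. k \<in> P \<Longrightarrow> k' \<in> P \<Longrightarrow> k \<noteq> k' \<Longrightarrow> Rq n (bl k) \<inter> Rq n (bl k') = {}"
  proof -
    fix k k' assume kk: "k \<in> P" "k' \<in> P" "k \<noteq> k'"
    have "bl k \<noteq> bl k'" "\<not> cadj (mB n) (bl k) (bl k')" using g kk unfolding goodP_def by auto
    moreover have "bl k < mB n" "bl k' < mB n" using dec Psub kk by blast+
    ultimately show "Rq n (bl k) \<inter> Rq n (bl k') = {}" using Rq_disj[OF n m3] by blast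
  qed
  have other: "\<And>k k' x. k \<in> P \<Longrightarrow> k' \<in> P \<Longrightarrow> k \<noteq> k' \<Longrightarrow> off k' \<noteq> 1 \<Longrightarrow> x \<in> Rq n (bl k)
      \<Longrightarrow> x \<noteq> fst (pr n k') \<and> x \<noteq> snd (pr n k')"
  proof -
    fix k k' x assume h: "k \<in> P" "k' \<in> P" "k \<noteq> k'" "off k' \<noteq> 1" "x \<in> Rq n (bl k)"
    have "fst (pr n k') \<in> Rq n (bl k')" "snd (pr n k') \<in> Rq n (bl k')"
      using in_R(4)[OF n] Psub h by auto
    then show "x \<noteq> fst (pr n k') \<and> x \<noteq> snd (pr n k')" using sep[OF h(1,2,3)] h(5) by blast
  qed
  have own: "\<And>k. k \<in> P \<Longrightarrow> off k \<noteq> 1 \<Longrightarrow> fst (pr n k) \<noteq> snd (pr n k) \<and> k \<noteq> fst (pr n k) \<and> k \<noteq> snd (pr n k)"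
  proof -
    fix k assume h: "k \<in> P" "off k \<noteq> 1"
    have k: "k \<in> {1..3 * mB n}" using h Psub by auto
    have d: "k = 3 * bl k + off k + 1" "off k < 3" using dec[OF k] by auto
    have e: "piAi n k = (if k = 1 then n else k - 1)" using piA_ev[OF n k] by auto
    show "fst (pr n k) \<noteq> snd (pr n k) \<and> k \<noteq> fst (pr n k) \<and> k \<noteq> snd (pr n k)"
      using d e h(2) k m3n unfolding pr_def by auto
  qed
  show mtM: "mt (Mt n P)"
    unfolding mt_def
  proof (intro conjI allI impI)
    fix a b c d assume ab: "(a, b) \<in> Mt n P" and cd: "(c, d) \<in> Mt n P" and h: "a = c \<or> a = d \<or> b = c \<or> b = d"
    obtain k where k: "k \<in> P" "off k \<noteq> 1" "(a, b) = pr n k" using ab unfolding Mt_def by auto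
    obtain k' where k': "k' \<in> P" "off k' \<noteq> 1" "(c, d) = pr n k'" using cd unfolding Mt_def by auto
    show "a = c" "b = d"
    proof -
      have "k = k'"
      proof (rule ccontr)
        assume "k \<noteq> k'"
        moreover have "a \<in> Rq n (bl k)" "b \<in> Rq n (bl k)"
          using in_R(4)[OF n _ k(2)] Psub k(1) k(3) by (metis fst_conv snd_conv subsetD)+
        ultimately show False using other[OF k(1) k'(1) _ k'(2)] k'(3) h
          by (metis fst_conv snd_conv)
      qed
      then show "a = c" "b = d" using k(3) k'(3) by (metis Pair_inject)+
    qed
  next
    fix a b assume ab: "(a, b) \<in> Mt n P"
    then obtain k where k: "k \<in> P" "off k \<noteq> 1" "(a, b) = pr n k" unfolding Mt_def by auto
    then show "a \<noteq> b" using own by (metis fst_conv snd_conv)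
  qed
  show inV: "\<And>a b. (a, b) \<in> Mt n P \<Longrightarrow> a \<in> {1..n} \<and> b \<in> {1..n}"
  proof -
    fix a b assume ab: "(a, b) \<in> Mt n P"
    then obtain k where k: "k \<in> P" "off k \<noteq> 1" "(a, b) = pr n k" unfolding Mt_def by auto
    have kk: "k \<in> {1..3 * mB n}" using k Psub by auto
    have d: "k = 3 * bl k + off k + 1" "off k < 3" "bl k < mB n" using dec[OF kk] by auto
    have e: "piAi n k = (if k = 1 then n else k - 1)" using piA_ev[OF n kk] by auto
    show "a \<in> {1..n} \<and> b \<in> {1..n}"
      using d e k(2,3) kk m3n unfolding pr_def by (auto split: if_splits)
  qed
  have fix_gen: "\<And>k x. k \<in> P \<Longrightarrow> x \<in> Rq n (bl k) \<Longrightarrow> (off k \<noteq> 1 \<Longrightarrow> x \<noteq> fst (pr n k) \<and> x \<noteq> snd (pr n k)) \<Longrightarrow> dl n P x = x"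
  proof -
    fix k x assume h: "k \<in> P" "x \<in> Rq n (bl k)" "off k \<noteq> 1 \<Longrightarrow> x \<noteq> fst (pr n k) \<and> x \<noteq> snd (pr n k)"
    show "dl n P x = x" unfolding dl_def
    proof (rule mswap_fix)
      fix y
      show "(x, y) \<notin> Mt n P \<and> (y, x) \<notin> Mt n P"
      proof (intro conjI notI)
        assume "(x, y) \<in> Mt n P"
        then obtain k' where k': "k' \<in> P" "off k' \<noteq> 1" "(x, y) = pr n k'" unfolding Mt_def by auto
        show False
        proof (cases "k' = k")
          case True then show ?thesis using h(3) k' by (metis fst_conv)
        next
          case False then show ?thesis using other[OF h(1) k'(1) _ k'(2) h(2)] k'(3) by (metis fst_conv)
        qed
      next
        assume "(y, x) \<in> Mt n P"
        then obtain k' where k': "k' \<in> P" "off k' \<noteq> 1" "(y, x) = pr n k'" unfolding Mt_def by auto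
        show False
        proof (cases "k' = k")
          case True then show ?thesis using h(3) k' by (metis snd_conv)
        next
          case False then show ?thesis using other[OF h(1) k'(1) _ k'(2) h(2)] k'(3) by (metis snd_conv)
        qed
      qed
    qed
  qed
  show "\<And>k. k \<in> P \<Longrightarrow> dl n P k = k"
  proof -
    fix k assume k: "k \<in> P"
    have kk: "k \<in> {1..3 * mB n}" using k Psub by auto
    show "dl n P k = k" by (rule fix_gen[OF k in_R(2)[OF n kk]]) (use own k in auto)
  qed
  show "\<And>k. k \<in> P \<Longrightarrow> dl n P (piAi n k) = piBi n k"
  proof -
    fix k assume k: "k \<in> P"
    have kk: "k \<in> {1..3 * mB n}" using k Psub by auto
    have d: "k = 3 * bl k + off k + 1" "off k < 3" "bl k < mB n" using dec[OF kk] by auto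
    have e: "piAi n k = (if k = 1 then n else k - 1)" using piA_ev[OF n kk] by auto
    note ev = piB_ev[OF d(3)]
    consider "off k = 0" | "off k = 1" | "off k = 2" using d(2) by linarith
    then show "dl n P (piAi n k) = piBi n k"
    proof cases
      case 1
      then have "(piAi n k, k + 2) \<in> Mt n P" using k unfolding Mt_def pr_def by force
      then have "dl n P (piAi n k) = k + 2" unfolding dl_def using mswap_pair(1)[OF mtM] by blast
      moreover have "piBi n k = k + 2" using ev(4) d(1) 1 by simp
      ultimately show ?thesis by simp
    next
      case 2
      have "piAi n k = k - 1" "piBi n k = k - 1" using ev(5) d(1) e 2 by auto
      moreover have "dl n P (k - 1) = k - 1"
        by (rule fix_gen[OF k]) (use in_R(1)[OF n kk] e 2 d(1) in auto)
      ultimately show ?thesis by simp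
    next
      case 3
      obtain q where q: "q = bl k" by blast
      have kq: "k = 3 * q + 3" using d(1) 3 q by simp
      have "piAi n k = k - 1" "piBi n k = k - 1" using ev(6) kq e q[symmetric] by auto
      moreover have "dl n P (k - 1) = k - 1"
        by (rule fix_gen[OF k]) (use in_R(1)[OF n kk] e 3 d(1) in \<open>auto simp: pr_def\<close>)
      ultimately show ?thesis by simp
    qed
  qed
  show "\<And>k. k \<in> P \<Longrightarrow> dl n P (piA n k) = piB n k"
  proof -
    fix k assume k: "k \<in> P"
    have kk: "k \<in> {1..3 * mB n}" using k Psub by auto
    have d: "k = 3 * bl k + off k + 1" "off k < 3" "bl k < mB n" using dec[OF kk] by auto
    have e: "piAi n k = (if k = 1 then n else k - 1)" "piA n k = k + 1" using piA_ev[OF n kk] by auto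
    note ev = piB_ev[OF d(3)]
    consider "off k = 0" | "off k = 1" | "off k = 2" using d(2) by linarith
    then show "dl n P (piA n k) = piB n k"
    proof cases
      case 1
      have "piB n k = k + 1" using ev(1) d(1) 1 by simp
      moreover have "dl n P (k + 1) = k + 1"
        by (rule fix_gen[OF k]) (use in_R(3)[OF n kk] e 1 d(1) m3n m3 in \<open>auto simp: pr_def\<close>)
      ultimately show ?thesis using e by simp
    next
      case 2
      have "piB n k = k + 1" using ev(2) d(1) 2 by simp
      moreover have "dl n P (k + 1) = k + 1"
        by (rule fix_gen[OF k]) (use in_R(3)[OF n kk] e 2 d(1) in auto)
      ultimately show ?thesis using e by simp
    next
      case 3
      obtain q where q: "q = bl k" by blast
      have kq: "k = 3 * q + 3" using d(1) 3 q by simp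
      have "(k - 2, k + 1) \<in> Mt n P" using k 3 unfolding Mt_def pr_def by force
      then have "dl n P (k + 1) = k - 2" unfolding dl_def using mswap_pair(2)[OF mtM] by blast
      moreover have "piB n k = k - 2" using ev(3) kq q[symmetric] by simp
      ultimately show ?thesis using e by simp
    qed
  qed
qed


definition Perms :: "nat \<Rightarrow> (nat \<Rightarrow> nat) set" where "Perms n = {s. s permutes {1..n}}"

lemma Perms_finite: "finite (Perms n)"
  unfolding Perms_def by (rule finite_permutations) simp

definition PPs :: "nat \<Rightarrow> qtree \<Rightarrow> (nat \<Rightarrow> nat) \<Rightarrow> nat set" where
  "PPs n t s = {k \<in> {1..n}. s k \<in> PV t (Bg n s)}"
definition good :: "nat \<Rightarrow> qtree \<Rightarrow> (nat \<Rightarrow> nat) \<Rightarrow> bool" where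
  "good n t s \<longleftrightarrow> goodP n (PPs n t s)"
definition Phi :: "nat \<Rightarrow> qtree \<Rightarrow> (nat \<Rightarrow> nat) \<Rightarrow> nat \<Rightarrow> nat" where
  "Phi n t s = s \<circ> dl n (PPs n t s)"

lemma coupling:
  assumes n: "1 \<le> n" and m3: "3 \<le> mB n" and s: "s permutes {1..n}" and g: "good n t s"
  shows "Phi n t s permutes {1..n}" "run t (Ag n (Phi n t s)) = run t (Bg n s)"
proof -
  let ?P = "PPs n t s"
  have gP: "goodP n ?P" using g unfolding good_def .
  note D = dl_good[OF n m3 gP]
  have dp: "dl n ?P permutes {1..n}" unfolding dl_def by (rule mswap_perm[OF D(1) D(2)])
  show ys: "Phi n t s permutes {1..n}" unfolding Phi_def by (rule permutes_compose[OF dp s])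
  let ?ys = "Phi n t s"
  have agree: "\<forall>v\<in>PV t (Bg n s). \<forall>i. Bg n s v i = Ag n ?ys v i"
  proof (intro ballI allI)
    fix v i assume v: "v \<in> PV t (Bg n s)"
    show "Bg n s v i = Ag n ?ys v i"
    proof (cases "v \<in> {1..n}")
      case False
      have "\<And>r. gr n r v i = 0" using False unfolding gr_def by auto
      then show ?thesis unfolding Bg_def Ag_def by simp
    next
      case True
      obtain k where k: "k \<in> {1..n}" "v = s k" using True perm_facts(2,3)[OF s] by metis
      have kP: "k \<in> ?P" unfolding PPs_def using k v by auto
      have yk: "?ys k = v" unfolding Phi_def using D(3)[OF kP] k by simp
      have r1: "cj s (piB n) permutes {1..n}" by (rule cj_perm[OF s piB_perm[OF n]])
      have r2: "cj ?ys (piA n) permutes {1..n}" by (rule cj_perm[OF ys piA_perm[OF n]])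
      have e1: "cj ?ys (piA n) v = cj s (piB n) v"
      proof -
        have "cj ?ys (piA n) v = ?ys (piA n k)" using cj_app[OF ys, of "piA n" k] yk by simp
        also have "\<dots> = s (piB n k)" unfolding Phi_def using D(5)[OF kP] by simp
        also have "\<dots> = cj s (piB n) v" using cj_app[OF s, of "piB n" k] k by simp
        finally show ?thesis .
      qed
      have e2: "inv (cj ?ys (piA n)) v = inv (cj s (piB n)) v"
      proof -
        have "inv (cj ?ys (piA n)) v = ?ys (inv (piA n) k)" using cj_inv_app[OF ys piA_perm[OF n], of k] yk by simp
        also have "\<dots> = s (piBi n k)" unfolding Phi_def using D(4)[OF kP] piA_inv[OF n] by simp
        also have "\<dots> = inv (cj s (piB n)) v" using cj_inv_app[OF s piB_perm[OF n], of k] k piB_inv[OF n] by simp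
        finally show ?thesis .
      qed
      show ?thesis unfolding Bg_def Ag_def using gr_local[OF r1 r2 e1[symmetric] e2[symmetric]] .
    qed
  qed
  show "run t (Ag n ?ys) = run t (Bg n s)" by (rule run_local2) (use agree in auto)
qed

lemma PPs_ys:
  assumes n: "1 \<le> n" and m3: "3 \<le> mB n" and s: "s permutes {1..n}" and g: "good n t s"
  shows "PPs n t s = {k \<in> {1..n}. Phi n t s k \<in> PV t (Ag n (Phi n t s))}"
proof -
  let ?P = "PPs n t s" and ?d = "dl n (PPs n t s)"
  have gP: "goodP n ?P" using g unfolding good_def .
  note D = dl_good[OF n m3 gP]
  have dp: "?d permutes {1..n}" unfolding dl_def by (rule mswap_perm[OF D(1) D(2)])
  have inv: "\<And>x. ?d (?d x) = x" unfolding dl_def by (rule mswap_invol[OF D(1)])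
  have pv: "PV t (Ag n (Phi n t s)) = PV t (Bg n s)" unfolding PV_def using coupling(2)[OF assms] by simp
  show ?thesis
  proof (rule set_eqI)
    fix k
    show "k \<in> ?P \<longleftrightarrow> k \<in> {k \<in> {1..n}. Phi n t s k \<in> PV t (Ag n (Phi n t s))}"
    proof
      assume k: "k \<in> ?P"
      then have "k \<in> {1..n}" "s k \<in> PV t (Bg n s)" unfolding PPs_def by auto
      moreover have "Phi n t s k = s k" unfolding Phi_def using D(3)[OF k] by simp
      ultimately show "k \<in> {k \<in> {1..n}. Phi n t s k \<in> PV t (Ag n (Phi n t s))}" using pv by simp
    next
      assume k: "k \<in> {k \<in> {1..n}. Phi n t s k \<in> PV t (Ag n (Phi n t s))}"
      then have k1: "k \<in> {1..n}" and "s (?d k) \<in> PV t (Bg n s)" using pv unfolding Phi_def by auto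
      moreover have "?d k \<in> {1..n}" using k1 permutes_in_image[OF dp] by simp
      ultimately have dk: "?d k \<in> ?P" unfolding PPs_def by auto
      then have "?d (?d k) = ?d k" using D(3) by blast
      then have "k = ?d k" using inv by simp
      then show "k \<in> ?P" using dk by simp
    qed
  qed
qed

lemma Phi_inj:
  assumes n: "1 \<le> n" and m3: "3 \<le> mB n"
  shows "inj_on (Phi n t) {s \<in> Perms n. good n t s}"
proof (rule inj_onI)
  fix s1 s2 assume a1: "s1 \<in> {s \<in> Perms n. good n t s}" and a2: "s2 \<in> {s \<in> Perms n. good n t s}"
    and e: "Phi n t s1 = Phi n t s2"
  have p1: "s1 permutes {1..n}" "good n t s1" and p2: "s2 permutes {1..n}" "good n t s2"
    using a1 a2 unfolding Perms_def by auto
  have PP: "PPs n t s1 = PPs n t s2"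
    using PPs_ys[OF n m3 p1] PPs_ys[OF n m3 p2] e by simp
  have g1: "goodP n (PPs n t s1)" using p1 unfolding good_def by simp
  have inv: "\<And>x. dl n (PPs n t s1) (dl n (PPs n t s1) x) = x"
    unfolding dl_def by (rule mswap_invol[OF dl_good(1)[OF n m3 g1]])
  have "s1 = Phi n t s1 \<circ> dl n (PPs n t s1)" unfolding Phi_def using inv by (simp add: fun_eq_iff)
  also have "\<dots> = Phi n t s2 \<circ> dl n (PPs n t s2)" using e PP by simp
  also have "\<dots> = s2" unfolding Phi_def using inv PP by (simp add: fun_eq_iff)
  finally show "s1 = s2" .
qed

lemma count_coupling:
  assumes n: "1 \<le> n" and m3: "3 \<le> mB n"
  shows "card {s \<in> Perms n. snd (run t (Bg n s)) = b \<and> good n t s} \<le> card {s \<in> Perms n. snd (run t (Ag n s)) = b}"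
proof (rule card_inj_on_le)
  show "inj_on (Phi n t) {s \<in> Perms n. snd (run t (Bg n s)) = b \<and> good n t s}"
    by (rule inj_on_subset[OF Phi_inj[OF n m3]]) auto
  show "Phi n t ` {s \<in> Perms n. snd (run t (Bg n s)) = b \<and> good n t s} \<subseteq> {s \<in> Perms n. snd (run t (Ag n s)) = b}"
  proof
    fix y assume "y \<in> Phi n t ` {s \<in> Perms n. snd (run t (Bg n s)) = b \<and> good n t s}"
    then obtain s where s: "s permutes {1..n}" "snd (run t (Bg n s)) = b" "good n t s" "y = Phi n t s"
      unfolding Perms_def by auto
    show "y \<in> {s \<in> Perms n. snd (run t (Ag n s)) = b}"
      using coupling[OF n m3 s(1) s(3)] s unfolding Perms_def by simp
  qed
  show "finite {s \<in> Perms n. snd (run t (Ag n s)) = b}" using Perms_finite by simp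
qed

lemma idZ:
  assumes r: "r permutes S" and E: "r x = y" "r y = w" "r w = x" "r z = z"
    and D: "x \<noteq> y" "y \<noteq> w" "x \<noteq> w" "z \<noteq> x" "z \<noteq> y" "z \<noteq> w"
  shows "r \<circ> tr x w \<circ> tr z w = tr x z \<circ> r \<circ> tr x z"
proof (rule ext)
  fix u
  have inj: "\<And>a b. r a = r b \<longleftrightarrow> a = b" using permutes_inj[OF r] by (simp add: inj_eq)
  note D' = D D[symmetric]
  consider "u = x" | "u = y" | "u = w" | "u = z" | "u \<notin> {x,y,w,z}" by blast
  then show "(r \<circ> tr x w \<circ> tr z w) u = (tr x z \<circ> r \<circ> tr x z) u"
  proof cases
    case 1 then show ?thesis using E D' by (simp add: transpose_def)
  next
    case 2 then show ?thesis using E D' by (simp add: transpose_def)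
  next
    case 3 then show ?thesis using E D' by (simp add: transpose_def)
  next
    case 4 then show ?thesis using E D' by (simp add: transpose_def)
  next
    case 5
    have "r u \<noteq> x" using inj[of u w] E 5 by auto
    moreover have "r u \<noteq> z" using inj[of u z] E 5 by auto
    ultimately show ?thesis using 5 by (simp add: transpose_def)
  qed
qed

lemma idS:
  assumes r: "r permutes S" and E: "r x = y" "r y = w" "r w = x" "r x' = y'" "r y' = w'" "r w' = x'"
    and D: "x \<noteq> y" "x \<noteq> w" "x \<noteq> x'" "x \<noteq> y'" "x \<noteq> w'" "y \<noteq> w" "y \<noteq> x'" "y \<noteq> y'" "y \<noteq> w'"
      "w \<noteq> x'" "w \<noteq> y'" "w \<noteq> w'" "x' \<noteq> y'" "x' \<noteq> w'" "y' \<noteq> w'"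
  shows "r \<circ> tr x w \<circ> tr x' w' \<circ> tr x w' \<circ> tr x' w = tr x x' \<circ> r \<circ> tr x x'"
proof (rule ext)
  fix u
  have inj: "\<And>a b. r a = r b \<longleftrightarrow> a = b" using permutes_inj[OF r] by (simp add: inj_eq)
  note D' = D D[symmetric]
  consider "u = x" | "u = y" | "u = w" | "u = x'" | "u = y'" | "u = w'" | "u \<notin> {x,y,w,x',y',w'}" by blast
  then show "(r \<circ> tr x w \<circ> tr x' w' \<circ> tr x w' \<circ> tr x' w) u = (tr x x' \<circ> r \<circ> tr x x') u"
  proof cases
    case 1 then show ?thesis using E D' by (simp add: transpose_def)
  next
    case 2 then show ?thesis using E D' by (simp add: transpose_def)
  next
    case 3 then show ?thesis using E D' by (simp add: transpose_def)
  next
    case 4 then show ?thesis using E D' by (simp add: transpose_def)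
  next
    case 5 then show ?thesis using E D' by (simp add: transpose_def)
  next
    case 6 then show ?thesis using E D' by (simp add: transpose_def)
  next
    case 7
    have "r u \<noteq> x" using inj[of u w] E 7 by auto
    moreover have "r u \<noteq> x'" using inj[of u w'] E 7 by auto
    ultimately show ?thesis using 7 by (simp add: transpose_def)
  qed
qed

lemma cj_swap:
  assumes s: "s permutes {1..n}" and pp: "pp permutes {1..n}" and pq: "p \<in> {1..n}" "q \<in> {1..n}"
  shows "cj (s \<circ> tr p q) pp = tr (s p) (s q) \<circ> cj s pp \<circ> tr (s p) (s q)"
proof (rule ext)
  fix u
  let ?t = "s \<circ> tr p q"
  have t: "?t permutes {1..n}" by (rule permutes_compose[OF permutes_swap_id[OF pq] s])
  show "cj ?t pp u = (tr (s p) (s q) \<circ> cj s pp \<circ> tr (s p) (s q)) u"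
  proof (cases "u \<in> {1..n}")
    case False
    have spq: "s p \<in> {1..n}" "s q \<in> {1..n}" using pq permutes_in_image[OF s] by auto
    have "cj ?t pp u = u" using cj_perm[OF t pp] False by (simp add: permutes_not_in)
    moreover have "cj s pp u = u" using cj_perm[OF s pp] False by (simp add: permutes_not_in)
    ultimately show ?thesis using False spq by auto
  next
    case True
    obtain k where k: "u = s k" using perm_facts(3)[OF s] by metis
    have inj: "\<And>a b. s a = s b \<longleftrightarrow> a = b" using perm_facts(6)[OF s] by blast
    have u2: "u = ?t (tr p q k)" using k by simp
    have l: "cj ?t pp u = s (tr p q (pp (tr p q k)))" using cj_app[OF t, of pp "tr p q k"] u2 by simp
    have tk: "tr (s p) (s q) u = s (tr p q k)" using k by (cases "k = p"; cases "k = q") (auto simp: inj)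
    have "cj s pp (s (tr p q k)) = s (pp (tr p q k))" by (rule cj_app[OF s])
    moreover have "tr (s p) (s q) (s (pp (tr p q k))) = s (tr p q (pp (tr p q k)))"
      by (cases "pp (tr p q k) = p"; cases "pp (tr p q k) = q") (auto simp: inj)
    ultimately show ?thesis using l tk by simp
  qed
qed

lemma DOstep:
  assumes "diff_oblivious 2 n e d T" "valid_graph 2 n f" "valid_graph 2 n g" "neighbouring 2 n f g"
  shows "measure_pmf.prob (access T f) S \<le> exp e * measure_pmf.prob (access T g) S + d"
proof -
  have H: "\<forall>f g S. valid_graph 2 n f \<and> valid_graph 2 n g \<and> neighbouring 2 n f g \<longrightarrow>
        measure_pmf.prob (access T f) S \<le> exp e * measure_pmf.prob (access T g) S + d"
    using assms(1) unfolding diff_oblivious_def .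
  show ?thesis using spec[OF spec[OF spec[OF H, of f], of g], of S] assms(2-4) by simp
qed

lemma chain2:
  assumes DO: "diff_oblivious 2 n e d T" and v: "valid_graph 2 n f0" "valid_graph 2 n f1" "valid_graph 2 n f2"
    and nb: "neighbouring 2 n f0 f1" "neighbouring 2 n f1 f2"
  shows "measure_pmf.prob (access T f0) S \<le> exp (2 * e) * measure_pmf.prob (access T f2) S + (1 + exp e) * d"
proof -
  define P0 where "P0 = measure_pmf.prob (access T f0) S"
  define P1 where "P1 = measure_pmf.prob (access T f1) S"
  define P2 where "P2 = measure_pmf.prob (access T f2) S"
  have a: "P0 \<le> exp e * P1 + d" unfolding P0_def P1_def by (rule DOstep[OF DO v(1,2) nb(1)])
  have b: "P1 \<le> exp e * P2 + d" unfolding P1_def P2_def by (rule DOstep[OF DO v(2,3) nb(2)])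
  have "exp e * P1 \<le> exp e * (exp e * P2 + d)" using b by (intro mult_left_mono) auto
  then have m: "exp e * P1 \<le> exp e * exp e * P2 + exp e * d" by (simp add: distrib_left mult.assoc del: mult_exp_exp)
  have e2: "exp (2 * e) = exp e * exp e" by (simp add: mult_exp_exp)
  have q: "exp (2 * e) * P2 + (1 + exp e) * d = exp e * exp e * P2 + exp e * d + d"
    unfolding e2 by (simp add: distrib_right del: mult_exp_exp)
  have "P0 \<le> exp e * exp e * P2 + exp e * d + d" using a m by linarith
  then show ?thesis using q unfolding P0_def P2_def by linarith
qed

lemma chain4:
  assumes DO: "diff_oblivious 2 n e d T"
    and v: "valid_graph 2 n f0" "valid_graph 2 n f1" "valid_graph 2 n f2" "valid_graph 2 n f3" "valid_graph 2 n f4"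
    and nb: "neighbouring 2 n f0 f1" "neighbouring 2 n f1 f2" "neighbouring 2 n f2 f3" "neighbouring 2 n f3 f4"
  shows "measure_pmf.prob (access T f0) S \<le> exp (4 * e) * measure_pmf.prob (access T f4) S
           + (1 + exp e + exp (2 * e) + exp (3 * e)) * d"
proof -
  define P0 where "P0 = measure_pmf.prob (access T f0) S"
  define P2 where "P2 = measure_pmf.prob (access T f2) S"
  define P4 where "P4 = measure_pmf.prob (access T f4) S"
  have a: "P0 \<le> exp (2 * e) * P2 + (1 + exp e) * d" unfolding P0_def P2_def by (rule chain2[OF DO v(1,2,3) nb(1,2)])
  have b: "P2 \<le> exp (2 * e) * P4 + (1 + exp e) * d" unfolding P2_def P4_def by (rule chain2[OF DO v(3,4,5) nb(3,4)])
  have "exp (2 * e) * P2 \<le> exp (2 * e) * (exp (2 * e) * P4 + (1 + exp e) * d)" using b by (intro mult_left_mono) auto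
  then have m: "exp (2 * e) * P2 \<le> exp (2 * e) * exp (2 * e) * P4 + exp (2 * e) * d + exp (2 * e) * exp e * d"
    by (simp add: distrib_left distrib_right mult.assoc del: mult_exp_exp)
  have e4: "exp (4 * e) = exp (2 * e) * exp (2 * e)" by (simp add: mult_exp_exp)
  have e3: "exp (3 * e) = exp (2 * e) * exp e" by (simp add: mult_exp_exp)
  have q: "exp (4 * e) * P4 + (1 + exp e + exp (2 * e) + exp (3 * e)) * d
      = exp (2 * e) * exp (2 * e) * P4 + exp (2 * e) * d + exp (2 * e) * exp e * d + (1 + exp e) * d"
    unfolding e4 e3 by (simp add: distrib_right del: mult_exp_exp)
  have "P0 \<le> exp (2 * e) * exp (2 * e) * P4 + exp (2 * e) * d + exp (2 * e) * exp e * d + (1 + exp e) * d"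
    using a m by linarith
  then show ?thesis using q unfolding P0_def P4_def by linarith
qed

lemma div3s: "Suc (3 * q) div 3 = q" "Suc (Suc (3 * q)) div 3 = q" "(3 * q + 2) div 3 = q" "(3 * q + 1) div 3 = q" "(3 * q) div 3 = q"
  by presburger+

lemma piB_tri:
  assumes p: "1 \<le> p" "p \<le> 3 * mB n"
  shows "1 \<le> piB n p \<and> piB n p \<le> 3 * mB n" "piB n p \<noteq> p" "piB n (piB n p) \<noteq> p"
    "piB n (piB n (piB n p)) = p" "bl (piB n p) = bl p" "bl (piB n (piB n p)) = bl p"
proof -
  have all: "(1 \<le> piB n p \<and> piB n p \<le> 3 * mB n) \<and> piB n p \<noteq> p \<and> piB n (piB n p) \<noteq> p \<and>
    piB n (piB n (piB n p)) = p \<and> bl (piB n p) = bl p \<and> bl (piB n (piB n p)) = bl p"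
  proof (cases rule: blk_cases[of p n])
    case out then show ?thesis using p by simp
  next
    case (a q) then show ?thesis using piB_ev[OF a(1)] by (simp add: bl_def div3s)
  next
    case (b q) then show ?thesis using piB_ev[OF b(1)] by (simp add: bl_def div3s)
  next
    case (c q) then show ?thesis using piB_ev[OF c(1)] by (simp add: bl_def div3s)
  qed
  then show "1 \<le> piB n p \<and> piB n p \<le> 3 * mB n" "piB n p \<noteq> p" "piB n (piB n p) \<noteq> p"
    "piB n (piB n (piB n p)) = p" "bl (piB n p) = bl p" "bl (piB n (piB n p)) = bl p" by auto
qed

lemma tr_perm: "a \<in> {1..n} \<Longrightarrow> b \<in> {1..n} \<Longrightarrow> r permutes {1..n} \<Longrightarrow> r \<circ> tr a b permutes {1..n}"
  by (rule permutes_compose[OF permutes_swap_id]) auto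

lemma chainZ:
  assumes DO: "diff_oblivious 2 n e d T" and n1: "1 \<le> n" and s: "s permutes {1..n}"
    and p: "1 \<le> p" "p \<le> 3 * mB n" and q: "3 * mB n < q" "q \<le> n"
  shows "measure_pmf.prob (access T (Bg n s)) S \<le> exp (2 * e) * measure_pmf.prob (access T (Bg n (s \<circ> tr p q))) S + (1 + exp e) * d"
proof -
  let ?r = "cj s (piB n)"
  have r: "?r permutes {1..n}" by (rule cj_perm[OF s piB_perm[OF n1]])
  have inj: "\<And>a b. s a = s b \<longleftrightarrow> a = b" using perm_facts(6)[OF s] by blast
  have inV: "\<And>k. k \<in> {1..n} \<Longrightarrow> s k \<in> {1..n}" using perm_facts(1)[OF s] by blast
  have m3: "3 * mB n < n" using mB_lt[OF n1] .
  note pt = piB_tri[OF p]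
  define x where "x = s p"
  define y where "y = s (piB n p)"
  define w where "w = s (piB n (piB n p))"
  define z where "z = s q"
  have pos: "p \<in> {1..n}" "piB n p \<in> {1..n}" "piB n (piB n p) \<in> {1..n}" "q \<in> {1..n}"
    using p pt(1) piB_tri[OF pt(1)[THEN conjunct1] pt(1)[THEN conjunct2]] m3 q by auto
  have V: "x \<in> {1..n}" "y \<in> {1..n}" "w \<in> {1..n}" "z \<in> {1..n}"
    unfolding x_def y_def w_def z_def using inV pos by auto
  note pt2 = piB_tri[OF pt(1)[THEN conjunct1] pt(1)[THEN conjunct2]]
  have pq: "piB n (piB n p) \<noteq> q" "piB n p \<noteq> q" "p \<noteq> q"
    using pt(1) piB_tri(1)[OF pt(1)[THEN conjunct1] pt(1)[THEN conjunct2]] p q by auto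
  have D: "x \<noteq> y" "y \<noteq> w" "x \<noteq> w" "z \<noteq> x" "z \<noteq> y" "z \<noteq> w"
    unfolding x_def y_def w_def z_def inj using pt(2,3) pt2(2) pq by auto
  have piBq: "piB n q = q" using piB_out[of q n] q by auto
  have E: "?r x = y" "?r y = w" "?r w = x" "?r z = z"
    unfolding x_def y_def w_def z_def using cj_app[OF s, of "piB n"] pt(4) piBq by auto
  define r1 where "r1 = ?r \<circ> tr x w"
  have r1: "r1 permutes {1..n}" unfolding r1_def by (rule tr_perm[OF V(1,3) r])
  have nb1: "neighbouring 2 n (gr n ?r) (gr n r1)" unfolding r1_def
    by (rule nb_isolate[OF r V(1,2,3) D(1,2,3) E(1,2,3)])
  have E1: "r1 z = z" "r1 y = w" "r1 w = y" unfolding r1_def using E D by auto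
  have nb2: "neighbouring 2 n (gr n r1) (gr n (r1 \<circ> tr z w))"
    by (rule nb_attach[OF r1 V(4,2,3)]) (use D E1 in auto)
  have eq: "r1 \<circ> tr z w = cj (s \<circ> tr p q) (piB n)"
  proof -
    have "r1 \<circ> tr z w = tr x z \<circ> ?r \<circ> tr x z" unfolding r1_def
      by (rule idZ[OF r E D])
    also have "\<dots> = cj (s \<circ> tr p q) (piB n)" unfolding x_def z_def
      by (rule cj_swap[OF s piB_perm[OF n1] pos(1) pos(4), symmetric])
    finally show ?thesis .
  qed
  have "measure_pmf.prob (access T (gr n ?r)) S \<le> exp (2 * e) * measure_pmf.prob (access T (gr n (r1 \<circ> tr z w))) S + (1 + exp e) * d"
    by (rule chain2[OF DO gr_valid[OF r] gr_valid[OF r1] gr_valid[OF tr_perm[OF V(4) V(3) r1]] nb1 nb2])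
  then show ?thesis unfolding Bg_def eq .
qed

lemma chainS:
  assumes DO: "diff_oblivious 2 n e d T" and n1: "1 \<le> n" and s: "s permutes {1..n}"
    and p: "1 \<le> p" "p \<le> 3 * mB n" and p': "1 \<le> p'" "p' \<le> 3 * mB n" and b: "bl p \<noteq> bl p'"
  shows "measure_pmf.prob (access T (Bg n s)) S \<le> exp (4 * e) * measure_pmf.prob (access T (Bg n (s \<circ> tr p p'))) S
           + (1 + exp e + exp (2 * e) + exp (3 * e)) * d"
proof -
  let ?r = "cj s (piB n)"
  have r: "?r permutes {1..n}" by (rule cj_perm[OF s piB_perm[OF n1]])
  have inj: "\<And>a b. s a = s b \<longleftrightarrow> a = b" using perm_facts(6)[OF s] by blast
  have inV: "\<And>k. k \<in> {1..n} \<Longrightarrow> s k \<in> {1..n}" using perm_facts(1)[OF s] by blast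
  have m3: "3 * mB n < n" using mB_lt[OF n1] .
  note pt = piB_tri[OF p] and pt' = piB_tri[OF p']
  note pt2 = piB_tri[OF pt(1)[THEN conjunct1] pt(1)[THEN conjunct2]]
  note pt2' = piB_tri[OF pt'(1)[THEN conjunct1] pt'(1)[THEN conjunct2]]
  define x where "x = s p"
  define y where "y = s (piB n p)"
  define w where "w = s (piB n (piB n p))"
  define x' where "x' = s p'"
  define y' where "y' = s (piB n p')"
  define w' where "w' = s (piB n (piB n p'))"
  have pos: "p \<in> {1..n}" "piB n p \<in> {1..n}" "piB n (piB n p) \<in> {1..n}"
     "p' \<in> {1..n}" "piB n p' \<in> {1..n}" "piB n (piB n p') \<in> {1..n}"
    using p p' pt(1) pt2(1) pt'(1) pt2'(1) m3 by auto
  have V: "x \<in> {1..n}" "y \<in> {1..n}" "w \<in> {1..n}" "x' \<in> {1..n}" "y' \<in> {1..n}" "w' \<in> {1..n}"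
    unfolding x_def y_def w_def x'_def y'_def w'_def using inV pos by auto
  have bb: "\<And>a c. bl a \<noteq> bl c \<Longrightarrow> a \<noteq> c" by auto
  have cross: "p \<noteq> p'" "p \<noteq> piB n p'" "p \<noteq> piB n (piB n p')"
     "piB n p \<noteq> p'" "piB n p \<noteq> piB n p'" "piB n p \<noteq> piB n (piB n p')"
     "piB n (piB n p) \<noteq> p'" "piB n (piB n p) \<noteq> piB n p'" "piB n (piB n p) \<noteq> piB n (piB n p')"
    using bb b pt(5,6) pt'(5,6) by metis+
  have D: "x \<noteq> y" "x \<noteq> w" "x \<noteq> x'" "x \<noteq> y'" "x \<noteq> w'" "y \<noteq> w" "y \<noteq> x'" "y \<noteq> y'" "y \<noteq> w'"
      "w \<noteq> x'" "w \<noteq> y'" "w \<noteq> w'" "x' \<noteq> y'" "x' \<noteq> w'" "y' \<noteq> w'"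
    unfolding x_def y_def w_def x'_def y'_def w'_def inj using pt(2,3) pt'(2,3) pt2(2) pt2'(2) cross by auto
  note D' = D D[symmetric]
  have E: "?r x = y" "?r y = w" "?r w = x" "?r x' = y'" "?r y' = w'" "?r w' = x'"
    unfolding x_def y_def w_def x'_def y'_def w'_def using cj_app[OF s, of "piB n"] pt(4) pt'(4) by auto
  define r1 where "r1 = ?r \<circ> tr x w"
  define r2 where "r2 = r1 \<circ> tr x' w'"
  define r3 where "r3 = r2 \<circ> tr x w'"
  define r4 where "r4 = r3 \<circ> tr x' w"
  have r1: "r1 permutes {1..n}" unfolding r1_def by (rule tr_perm[OF V(1,3) r])
  have r2: "r2 permutes {1..n}" unfolding r2_def by (rule tr_perm[OF V(4,6) r1])
  have r3: "r3 permutes {1..n}" unfolding r3_def by (rule tr_perm[OF V(1,6) r2])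
  have r4: "r4 permutes {1..n}" unfolding r4_def by (rule tr_perm[OF V(4,3) r3])
  have nb1: "neighbouring 2 n (gr n ?r) (gr n r1)" unfolding r1_def
    by (rule nb_isolate[OF r V(1,2,3)]) (use D' E in auto)
  have E1: "r1 x' = y'" "r1 y' = w'" "r1 w' = x'" unfolding r1_def using E D' by auto
  have nb2: "neighbouring 2 n (gr n r1) (gr n r2)" unfolding r2_def
    by (rule nb_isolate[OF r1 V(4,5,6)]) (use D' E1 in auto)
  have E2: "r2 x = x" "r2 y' = w'" "r2 w' = y'" unfolding r2_def r1_def using E D' by auto
  have nb3: "neighbouring 2 n (gr n r2) (gr n r3)" unfolding r3_def
    by (rule nb_attach[OF r2 V(1,5,6)]) (use D' E2 in auto)
  have E3: "r3 x' = x'" "r3 y = w" "r3 w = y" unfolding r3_def r2_def r1_def using E D' by auto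
  have nb4: "neighbouring 2 n (gr n r3) (gr n r4)" unfolding r4_def
    by (rule nb_attach[OF r3 V(4,2,3)]) (use D' E3 in auto)
  have eq: "r4 = cj (s \<circ> tr p p') (piB n)"
  proof -
    have "r4 = tr x x' \<circ> ?r \<circ> tr x x'" unfolding r4_def r3_def r2_def r1_def
      by (rule idS[OF r E D])
    also have "\<dots> = cj (s \<circ> tr p p') (piB n)" unfolding x_def x'_def
      by (rule cj_swap[OF s piB_perm[OF n1] pos(1) pos(4), symmetric])
    finally show ?thesis .
  qed
  have "measure_pmf.prob (access T (gr n ?r)) S \<le> exp (4 * e) * measure_pmf.prob (access T (gr n r4)) S
           + (1 + exp e + exp (2 * e) + exp (3 * e)) * d"
    by (rule chain4[OF DO gr_valid[OF r] gr_valid[OF r1] gr_valid[OF r2] gr_valid[OF r3] gr_valid[OF r4] nb1 nb2 nb3 nb4])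
  then show ?thesis unfolding Bg_def eq .
qed

lemma sum_reindex_perm:
  assumes t: "t permutes {1..n}"
  shows "(\<Sum>s\<in>Perms n. h (s \<circ> t)) = (\<Sum>s\<in>Perms n. h s)"
proof (rule sum.reindex_bij_witness[where i="\<lambda>s. s \<circ> inv t" and j="\<lambda>s. s \<circ> t"])
  have it: "inv t permutes {1..n}" by (rule permutes_inv[OF t])
  fix a assume a: "a \<in> Perms n"
  show "a \<circ> inv t \<circ> t = a" using permutes_inv_o(2)[OF t] by (simp add: comp_assoc)
  show "a \<circ> inv t \<in> Perms n" using a it unfolding Perms_def by (simp add: permutes_compose)
  show "a \<circ> t \<circ> inv t = a" using permutes_inv_o(1)[OF t] by (simp add: comp_assoc)
  show "a \<circ> t \<in> Perms n" using a t unfolding Perms_def by (simp add: permutes_compose)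
  show "h (a \<circ> t) = h (a \<circ> t)" ..
qed

lemma pos3: "j < 3 \<Longrightarrow> bl (3 * c + j + 1) = c \<and> off (3 * c + j + 1) = j"
  unfolding bl_def off_def by simp

lemma tri_rep:
  assumes x: "1 \<le> x" "x \<le> 3 * mB n"
  shows "x = 3 * bl x + off x + 1" "bl x < mB n" "off x < 3"
    "piB n x = 3 * bl x + (off x + 1) mod 3 + 1"
proof -
  show d: "x = 3 * bl x + off x + 1" "bl x < mB n" "off x < 3" using dec[of x n] x by auto
  obtain c j where cj: "c = bl x" "j = off x" by blast
  have xc: "x = 3 * c + j + 1" "c < mB n" "j < 3" using d cj by auto
  consider "j = 0" | "j = 1" | "j = 2" using xc(3) by linarith
  then have "piB n x = 3 * c + (j + 1) mod 3 + 1"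
  proof cases
    case 1 then show ?thesis using piB_ev(1)[OF xc(2)] xc(1) by simp
  next
    case 2 then show ?thesis using piB_ev(2)[OF xc(2)] xc(1) by simp
  next
    case 3
    have x3: "x = 3 * c + 3" using xc(1) 3 by simp
    show ?thesis unfolding x3 using piB_ev(3)[OF xc(2)] 3 by simp
  qed
  then show "piB n x = 3 * bl x + (off x + 1) mod 3 + 1" using cj by simp
qed

definition bt :: "nat \<Rightarrow> nat \<Rightarrow> nat \<Rightarrow> nat \<Rightarrow> nat" where
  "bt n a b x = (if 1 \<le> x \<and> x \<le> 3 * mB n \<and> bl x = a then 3 * b + off x + 1
                 else if 1 \<le> x \<and> x \<le> 3 * mB n \<and> bl x = b then 3 * a + off x + 1 else x)"

lemma bt_vals:
  assumes ab: "a < mB n" "b < mB n" and j: "j < 3"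
  shows "bt n a b (3 * a + j + 1) = 3 * b + j + 1" "bt n a b (3 * b + j + 1) = 3 * a + j + 1"
proof -
  have p: "bl (3 * a + j + 1) = a" "off (3 * a + j + 1) = j" "bl (3 * b + j + 1) = b" "off (3 * b + j + 1) = j"
    using pos3[OF j] by auto
  have r: "1 \<le> 3 * a + j + 1 \<and> 3 * a + j + 1 \<le> 3 * mB n" "1 \<le> 3 * b + j + 1 \<and> 3 * b + j + 1 \<le> 3 * mB n"
    using ab j by auto
  show "bt n a b (3 * a + j + 1) = 3 * b + j + 1" unfolding bt_def using p r by simp
  show "bt n a b (3 * b + j + 1) = 3 * a + j + 1" unfolding bt_def using p r by auto
qed

lemma bt_other:
  assumes "c \<noteq> a" "c \<noteq> b" "j < 3"
  shows "bt n a b (3 * c + j + 1) = 3 * c + j + 1"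
  using pos3[OF assms(3)] assms(1,2) unfolding bt_def by auto

lemma bt_gen:
  assumes ab: "a < mB n" "b < mB n"
  shows "bt n a b (bt n a b x) = x" "x \<in> {1..n} \<Longrightarrow> bt n a b x \<in> {1..n}"
    "piB n (bt n a b x) = bt n a b (piB n x)"
proof -
  have n1: "1 \<le> n" using ab unfolding mB_def by (cases n) auto
  have m3: "3 * mB n < n" using mB_lt[OF n1] .
  have all: "bt n a b (bt n a b x) = x \<and> (x \<in> {1..n} \<longrightarrow> bt n a b x \<in> {1..n}) \<and> piB n (bt n a b x) = bt n a b (piB n x)"
  proof (cases "1 \<le> x \<and> x \<le> 3 * mB n")
    case False
    then have "bt n a b x = x" unfolding bt_def by auto
    moreover have "piB n x = x" using False unfolding piB_def by auto
    ultimately show ?thesis by simp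
  next
    case True
    note R = tri_rep[OF True[THEN conjunct1] True[THEN conjunct2]]
    define c where "c = bl x"
    define j where "j = off x"
    have xc: "x = 3 * c + j + 1" "c < mB n" "j < 3" using R unfolding c_def j_def by auto
    have pj: "(j + 1) mod 3 < 3" by simp
    have px: "piB n x = 3 * c + (j + 1) mod 3 + 1" using R unfolding c_def j_def by simp
    have inV: "\<And>d i. d < mB n \<Longrightarrow> i < 3 \<Longrightarrow> 3 * d + i + 1 \<in> {1..n}" using m3 by auto
    consider "c = a" | "c \<noteq> a" "c = b" | "c \<noteq> a" "c \<noteq> b" by blast
    then show ?thesis
    proof cases
      case 1
      have b1: "bt n a b x = 3 * b + j + 1" using bt_vals(1)[OF ab xc(3)] xc 1 by simp
      have b2: "bt n a b (3 * b + j + 1) = 3 * a + j + 1" by (rule bt_vals(2)[OF ab xc(3)])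
      have b3: "bt n a b (piB n x) = 3 * b + (j + 1) mod 3 + 1" using bt_vals(1)[OF ab pj] px 1 by simp
      have b4: "piB n (3 * b + j + 1) = 3 * b + (j + 1) mod 3 + 1"
        using tri_rep(4)[of "3 * b + j + 1" n] pos3[OF xc(3), of b] ab xc(3) by auto
      show ?thesis using b1 b2 b3 b4 xc 1 inV[OF ab(2) xc(3)] by simp
    next
      case 2
      have b1: "bt n a b x = 3 * a + j + 1" using bt_vals(2)[OF ab xc(3)] xc 2 by simp
      have b2: "bt n a b (3 * a + j + 1) = 3 * b + j + 1" by (rule bt_vals(1)[OF ab xc(3)])
      have b3: "bt n a b (piB n x) = 3 * a + (j + 1) mod 3 + 1" using bt_vals(2)[OF ab pj] px 2 by simp
      have b4: "piB n (3 * a + j + 1) = 3 * a + (j + 1) mod 3 + 1"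
        using tri_rep(4)[of "3 * a + j + 1" n] pos3[OF xc(3), of a] ab xc(3) by auto
      show ?thesis using b1 b2 b3 b4 xc 2 inV[OF ab(1) xc(3)] by simp
    next
      case 3
      have b1: "bt n a b x = x" using bt_other[OF 3 xc(3)] xc by simp
      have b3: "bt n a b (piB n x) = piB n x" using bt_other[OF 3 pj] px by simp
      show ?thesis using b1 b3 by simp
    qed
  qed
  then show "bt n a b (bt n a b x) = x" "x \<in> {1..n} \<Longrightarrow> bt n a b x \<in> {1..n}"
    "piB n (bt n a b x) = bt n a b (piB n x)" by auto
qed

lemma bt_perm:
  assumes ab: "a < mB n" "b < mB n"
  shows "bt n a b permutes {1..n}"
proof (rule bij_imp_permutes)
  show "bij_betw (bt n a b) {1..n} {1..n}"
    by (rule bij_betw_byWitness[where f'="bt n a b"]) (use bt_gen[OF ab] in auto)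
  show "\<And>x. x \<notin> {1..n} \<Longrightarrow> bt n a b x = x"
  proof -
    fix x assume x: "x \<notin> {1..n}"
    have "3 * mB n < n \<or> n = 0" using mB_lt[of n] by linarith
    then show "bt n a b x = x" using x unfolding bt_def by (auto simp: mB_def)
  qed
qed

lemma Bg_bt:
  assumes ab: "a < mB n" "b < mB n" and s: "s permutes {1..n}" and n1: "1 \<le> n"
  shows "Bg n (s \<circ> bt n a b) = Bg n s"
proof -
  let ?b = "bt n a b"
  have bp: "?b permutes {1..n}" by (rule bt_perm[OF ab])
  have t: "s \<circ> ?b permutes {1..n}" by (rule permutes_compose[OF bp s])
  have "cj (s \<circ> ?b) (piB n) = cj s (piB n)"
  proof (rule ext)
    fix u
    show "cj (s \<circ> ?b) (piB n) u = cj s (piB n) u"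
    proof (cases "u \<in> {1..n}")
      case False
      have "cj (s \<circ> ?b) (piB n) u = u" using cj_perm[OF t piB_perm[OF n1]] False by (simp add: permutes_not_in)
      moreover have "cj s (piB n) u = u" using cj_perm[OF s piB_perm[OF n1]] False by (simp add: permutes_not_in)
      ultimately show ?thesis by simp
    next
      case True
      obtain k where k: "u = s k" using perm_facts(3)[OF s] by metis
      have u2: "u = (s \<circ> ?b) (?b k)" using k bt_gen(1)[OF ab] by simp
      have "cj (s \<circ> ?b) (piB n) u = s (?b (piB n (?b k)))" using cj_app[OF t, of "piB n" "?b k"] u2 by simp
      also have "\<dots> = s (piB n k)" using bt_gen(1,3)[OF ab] by simp
      also have "\<dots> = cj s (piB n) u" using cj_app[OF s] k by simp
      finally show ?thesis .
    qed
  qed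
  then show ?thesis unfolding Bg_def by simp
qed

definition PVB :: "nat \<Rightarrow> qtree \<Rightarrow> (nat \<Rightarrow> nat) \<Rightarrow> nat set" where "PVB n t s = PV t (Bg n s)"
definition nx :: "nat \<Rightarrow> nat \<Rightarrow> nat" where "nx m k = (if Suc k = m then 0 else Suc k)"
definition blkp :: "nat \<Rightarrow> qtree \<Rightarrow> (nat \<Rightarrow> nat) \<Rightarrow> nat \<Rightarrow> bool" where
  "blkp n t s k \<longleftrightarrow> (\<exists>j<3. s (3 * k + j + 1) \<in> PVB n t s)"
definition Zs :: "nat \<Rightarrow> qtree \<Rightarrow> (nat \<Rightarrow> nat) \<Rightarrow> real" where
  "Zs n t s = (\<Sum>q\<in>{3 * mB n + 1..n}. of_bool (s q \<in> PVB n t s))"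
definition Ss :: "nat \<Rightarrow> qtree \<Rightarrow> (nat \<Rightarrow> nat) \<Rightarrow> real" where
  "Ss n t s = (\<Sum>p\<in>{1..3 * mB n}. of_bool (s p \<in> PVB n t s \<and>
       (s (piB n p) \<in> PVB n t s \<or> s (piB n (piB n p)) \<in> PVB n t s)))"
definition As :: "nat \<Rightarrow> qtree \<Rightarrow> (nat \<Rightarrow> nat) \<Rightarrow> real" where
  "As n t s = (\<Sum>k<mB n. of_bool (blkp n t s k \<and> blkp n t s (nx (mB n) k)))"

lemma same_block:
  assumes k: "1 \<le> k" "k \<le> 3 * mB n" and k': "1 \<le> k'" "k' \<le> 3 * mB n" and b: "bl k = bl k'"
  shows "k' = k \<or> k' = piB n k \<or> k' = piB n (piB n k)"
proof -
  note R = tri_rep[OF k] and R' = tri_rep[OF k']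
  obtain c j j' where cj: "c = bl k" "j = off k" "j' = off k'" by blast
  have xc: "k = 3 * c + j + 1" "k' = 3 * c + j' + 1" "j < 3" "j' < 3" "c < mB n" using R R' b cj by auto
  have pk: "piB n k = 3 * c + (j + 1) mod 3 + 1" using R(4) cj by simp
  have pk1: "1 \<le> piB n k" "piB n k \<le> 3 * mB n" using piB_tri(1)[OF k] by auto
  have R2: "piB n (piB n k) = 3 * bl (piB n k) + (off (piB n k) + 1) mod 3 + 1" using tri_rep(4)[OF pk1] .
  have "bl (piB n k) = c" "off (piB n k) = (j + 1) mod 3" using pos3[of "(j + 1) mod 3" c] pk by auto
  then have pk2: "piB n (piB n k) = 3 * c + ((j + 1) mod 3 + 1) mod 3 + 1" using R2 by simp
  have jj: "j = 0 \<or> j = 1 \<or> j = 2" "j' = 0 \<or> j' = 1 \<or> j' = 2" using xc by auto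
  show ?thesis using jj xc pk pk2 by (elim disjE) auto
qed

lemma indic_le_sum:
  fixes f :: "'a \<Rightarrow> real"
  assumes "finite A" "i \<in> A" "\<And>x. x \<in> A \<Longrightarrow> 0 \<le> f x"
  shows "f i \<le> sum f A"
  using member_le_sum[of i A f] assms by auto

lemma bad_le:
  assumes n1: "1 \<le> n" and m3: "3 \<le> mB n" and s: "s permutes {1..n}" and ng: "\<not> good n t s"
  shows "1 \<le> Zs n t s + Ss n t s + As n t s"
proof -
  let ?m = "mB n" and ?P = "PPs n t s" and ?W = "PVB n t s"
  have Zn: "0 \<le> Zs n t s" unfolding Zs_def by (rule sum_nonneg) auto
  have Sn: "0 \<le> Ss n t s" unfolding Ss_def by (rule sum_nonneg) auto
  have An: "0 \<le> As n t s" unfolding As_def by (rule sum_nonneg) auto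
  have PPW: "\<And>k. k \<in> ?P \<longleftrightarrow> k \<in> {1..n} \<and> s k \<in> ?W" unfolding PPs_def PVB_def by auto
  show ?thesis
  proof (cases "?P \<subseteq> {1..3 * ?m}")
    case False
    then obtain k where k: "k \<in> ?P" "k \<notin> {1..3 * ?m}" by blast
    have kz: "k \<in> {3 * ?m + 1..n}" "s k \<in> ?W" using k PPW by auto
    have "of_bool (s k \<in> ?W) \<le> Zs n t s" unfolding Zs_def
      by (rule indic_le_sum[where f="\<lambda>q. of_bool (s q \<in> ?W)"]) (use kz in auto)
    then show ?thesis using kz Sn An by simp
  next
    case True
    then obtain k k' where kk: "k \<in> ?P" "k' \<in> ?P" "k \<noteq> k'" "bl k = bl k' \<or> cadj ?m (bl k) (bl k')"
      using ng unfolding good_def goodP_def by blast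
    have kT: "1 \<le> k" "k \<le> 3 * ?m" "1 \<le> k'" "k' \<le> 3 * ?m" using kk True by auto
    have kW: "s k \<in> ?W" "s k' \<in> ?W" using kk PPW by auto
    show ?thesis
    proof (cases "bl k = bl k'")
      case True
      have "k' = piB n k \<or> k' = piB n (piB n k)" using same_block[OF kT True] kk(3) by auto
      then have ev: "s k \<in> ?W \<and> (s (piB n k) \<in> ?W \<or> s (piB n (piB n k)) \<in> ?W)" using kW by auto
      have "of_bool (s k \<in> ?W \<and> (s (piB n k) \<in> ?W \<or> s (piB n (piB n k)) \<in> ?W)) \<le> Ss n t s" unfolding Ss_def
        by (rule indic_le_sum[where f="\<lambda>p. of_bool (s p \<in> ?W \<and> (s (piB n p) \<in> ?W \<or> s (piB n (piB n p)) \<in> ?W))"])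
           (use kT in auto)
      then show ?thesis using ev Zn An by simp
    next
      case False
      then have ca: "cadj ?m (bl k) (bl k')" using kk(4) by simp
      note R = tri_rep[OF kT(1,2)] and R' = tri_rep[OF kT(3,4)]
      have bk: "blkp n t s (bl k)" unfolding blkp_def using R(1,3) kW(1) by (intro exI[of _ "off k"]) auto
      have bk': "blkp n t s (bl k')" unfolding blkp_def using R'(1,3) kW(2) by (intro exI[of _ "off k'"]) auto
      have "\<exists>i<?m. blkp n t s i \<and> blkp n t s (nx ?m i)"
      proof -
        consider "bl k' = Suc (bl k)" | "bl k = Suc (bl k')" | "bl k = 0 \<and> bl k' = ?m - 1" | "bl k' = 0 \<and> bl k = ?m - 1"
          using ca unfolding cadj_def by blast
        then show ?thesis
        proof cases
          case 1 then have "nx ?m (bl k) = bl k'" using R'(2) unfolding nx_def by auto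
          then show ?thesis using bk bk' R(2) by metis
        next
          case 2 then have "nx ?m (bl k') = bl k" using R(2) unfolding nx_def by auto
          then show ?thesis using bk bk' R'(2) by metis
        next
          case 3 then have "nx ?m (bl k') = bl k" using m3 unfolding nx_def by auto
          then show ?thesis using bk bk' R'(2) by metis
        next
          case 4 then have "nx ?m (bl k) = bl k'" using m3 unfolding nx_def by auto
          then show ?thesis using bk bk' R(2) by metis
        qed
      qed
      then obtain i where i: "i < ?m" "blkp n t s i \<and> blkp n t s (nx ?m i)" by blast
      have "of_bool (blkp n t s i \<and> blkp n t s (nx ?m i)) \<le> As n t s" unfolding As_def
        by (rule indic_le_sum[where f="\<lambda>k. of_bool (blkp n t s k \<and> blkp n t s (nx ?m k))"]) (use i in auto)
      then show ?thesis using i Zn Sn by simp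
    qed
  qed
qed

lemma int_bdd:
  fixes g :: "'a \<Rightarrow> real"
  assumes "\<And>t. \<bar>g t\<bar> \<le> B"
  shows "integrable (measure_pmf T) g"
  by (rule measure_pmf.integrable_const_bound[where B=B]) (use assms in auto)

lemma int_ind: "integrable (measure_pmf T) (\<lambda>t. of_bool (P t) :: real)"
  by (rule int_bdd[where B=1]) auto

lemma prob_access: "measure_pmf.prob (access T f) S = measure_pmf.expectation T (\<lambda>t. of_bool (fst (run t f) \<in> S))"
proof -
  have "measure_pmf.prob (access T f) S = measure_pmf.prob T ((\<lambda>t. fst (run t f)) -` S)"
    unfolding access_def by (rule measure_map_pmf)
  also have "\<dots> = measure_pmf.expectation T (indicator ((\<lambda>t. fst (run t f)) -` S))" by simp
  also have "\<dots> = measure_pmf.expectation T (\<lambda>t. of_bool (fst (run t f) \<in> S))"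
    by (rule Bochner_Integration.integral_cong) (auto simp: indicator_def)
  finally show ?thesis .
qed

lemma prob_out: "measure_pmf.prob (tester_output T f) {b} = measure_pmf.expectation T (\<lambda>t. of_bool (snd (run t f) = b))"
proof -
  have "measure_pmf.prob (tester_output T f) {b} = measure_pmf.prob T ((\<lambda>t. snd (run t f)) -` {b})"
    unfolding tester_output_def by (rule measure_map_pmf)
  also have "\<dots> = measure_pmf.expectation T (indicator ((\<lambda>t. snd (run t f)) -` {b}))" by simp
  also have "\<dots> = measure_pmf.expectation T (\<lambda>t. of_bool (snd (run t f) = b))"
    by (rule Bochner_Integration.integral_cong) (auto simp: indicator_def)
  finally show ?thesis .
qed

lemma prob_PV: "measure_pmf.prob (access T f) {ps. \<exists>i. (v, i) \<in> set ps} = measure_pmf.expectation T (\<lambda>t. of_bool (v \<in> PV t f))"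
  unfolding prob_access PV_def by simp

lemma count_inj:
  assumes "inj_on h A" "finite W"
  shows "(\<Sum>p\<in>A. of_bool (h p \<in> W) :: real) \<le> real (card W)"
proof (cases "finite A")
  case True
  have "(\<Sum>p\<in>A. of_bool (h p \<in> W) :: real) = real (card {p \<in> A. h p \<in> W})"
    using True by (simp add: of_bool_def sum.If_cases Int_def)
  also have "card {p \<in> A. h p \<in> W} = card (h ` {p \<in> A. h p \<in> W})"
    by (rule card_image[symmetric]) (rule inj_on_subset[OF assms(1)], auto)
  also have "\<dots> \<le> card W" by (rule card_mono[OF assms(2)]) auto
  finally show ?thesis by simp
next
  case False then show ?thesis by simp
qed

lemma EE_le_AE:
  fixes g :: "'a \<Rightarrow> real"
  assumes "integrable (measure_pmf T) g" "\<And>t. t \<in> set_pmf T \<Longrightarrow> g t \<le> c"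
  shows "measure_pmf.expectation T g \<le> c"
proof -
  have "measure_pmf.expectation T g \<le> measure_pmf.expectation T (\<lambda>_. c)"
    by (rule integral_mono_AE[OF assms(1)]) (auto intro!: AE_pmfI assms(2))
  then show ?thesis by simp
qed

lemma EE_sum:
  fixes f :: "'b \<Rightarrow> 'a \<Rightarrow> real"
  assumes "\<And>i. i \<in> I \<Longrightarrow> integrable (measure_pmf T) (f i)"
  shows "measure_pmf.expectation T (\<lambda>t. \<Sum>i\<in>I. f i t) = (\<Sum>i\<in>I. measure_pmf.expectation T (f i))"
  by (rule Bochner_Integration.integral_sum[OF assms])

lemma EE_sum2:
  fixes f :: "'b \<Rightarrow> 'c \<Rightarrow> 'a \<Rightarrow> real"
  assumes "\<And>i j. integrable (measure_pmf T) (f i j)"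
  shows "measure_pmf.expectation T (\<lambda>t. \<Sum>i\<in>I. \<Sum>j\<in>J. f i j t) = (\<Sum>i\<in>I. \<Sum>j\<in>J. measure_pmf.expectation T (f i j))"
proof -
  have "measure_pmf.expectation T (\<lambda>t. \<Sum>i\<in>I. \<Sum>j\<in>J. f i j t) = (\<Sum>i\<in>I. measure_pmf.expectation T (\<lambda>t. \<Sum>j\<in>J. f i j t))"
    by (rule EE_sum) (use assms in \<open>simp add: integrable_sum\<close>)
  also have "\<dots> = (\<Sum>i\<in>I. \<Sum>j\<in>J. measure_pmf.expectation T (f i j))"
    by (rule sum.cong[OF refl], rule EE_sum) (use assms in simp)
  finally show ?thesis .
qed

lemma sumZ_step:
  assumes DO: "diff_oblivious 2 n e d T" and n1: "1 \<le> n"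
    and p: "1 \<le> p" "p \<le> 3 * mB n" and q: "3 * mB n < q" "q \<le> n"
  shows "(\<Sum>s\<in>Perms n. measure_pmf.expectation T (\<lambda>t. of_bool (s q \<in> PVB n t s)))
     \<le> exp (2 * e) * (\<Sum>s\<in>Perms n. measure_pmf.expectation T (\<lambda>t. of_bool (s p \<in> PVB n t s)))
        + real (card (Perms n)) * ((1 + exp e) * d)"
proof -
  let ?t = "tr p q"
  have tp: "?t permutes {1..n}" by (rule permutes_swap_id) (use p q in auto)
  have step: "\<And>s. s \<in> Perms n \<Longrightarrow> measure_pmf.expectation T (\<lambda>t. of_bool (s q \<in> PVB n t s))
      \<le> exp (2 * e) * measure_pmf.expectation T (\<lambda>t. of_bool ((s \<circ> ?t) p \<in> PVB n t (s \<circ> ?t))) + (1 + exp e) * d"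
  proof -
    fix s assume s: "s \<in> Perms n"
    have sp: "s permutes {1..n}" using s unfolding Perms_def by simp
    have "measure_pmf.prob (access T (Bg n s)) {ps. \<exists>i. (s q, i) \<in> set ps} \<le>
        exp (2 * e) * measure_pmf.prob (access T (Bg n (s \<circ> ?t))) {ps. \<exists>i. (s q, i) \<in> set ps} + (1 + exp e) * d"
      by (rule chainZ[OF DO n1 sp p q])
    moreover have "(s \<circ> ?t) p = s q" by simp
    ultimately show "measure_pmf.expectation T (\<lambda>t. of_bool (s q \<in> PVB n t s))
      \<le> exp (2 * e) * measure_pmf.expectation T (\<lambda>t. of_bool ((s \<circ> ?t) p \<in> PVB n t (s \<circ> ?t))) + (1 + exp e) * d"
      unfolding prob_PV PVB_def by simp
  qed
  have "(\<Sum>s\<in>Perms n. measure_pmf.expectation T (\<lambda>t. of_bool (s q \<in> PVB n t s)))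
      \<le> (\<Sum>s\<in>Perms n. exp (2 * e) * measure_pmf.expectation T (\<lambda>t. of_bool ((s \<circ> ?t) p \<in> PVB n t (s \<circ> ?t))) + (1 + exp e) * d)"
    by (rule sum_mono[OF step])
  also have "\<dots> = exp (2 * e) * (\<Sum>s\<in>Perms n. measure_pmf.expectation T (\<lambda>t. of_bool ((s \<circ> ?t) p \<in> PVB n t (s \<circ> ?t))))
      + real (card (Perms n)) * ((1 + exp e) * d)"
    by (simp add: sum.distrib sum_distrib_left)
  also have "(\<Sum>s\<in>Perms n. measure_pmf.expectation T (\<lambda>t. of_bool ((s \<circ> ?t) p \<in> PVB n t (s \<circ> ?t))))
      = (\<Sum>s\<in>Perms n. measure_pmf.expectation T (\<lambda>t. of_bool (s p \<in> PVB n t s)))"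
    by (rule sum_reindex_perm[OF tp, where h="\<lambda>s. measure_pmf.expectation T (\<lambda>t. of_bool (s p \<in> PVB n t s))"])
  finally show ?thesis .
qed

lemma Bg_valid: "1 \<le> n \<Longrightarrow> s permutes {1..n} \<Longrightarrow> valid_graph 2 n (Bg n s)"
  unfolding Bg_def by (rule gr_valid[OF cj_perm[OF _ piB_perm]])

lemma PVB_bound:
  assumes HB: "\<forall>f. valid_graph 2 n f \<longrightarrow> (\<forall>t\<in>set_pmf T. real (num_probes t f) < L)"
    and n1: "1 \<le> n" and s: "s permutes {1..n}" and t: "t \<in> set_pmf T"
  shows "real (card (PVB n t s)) \<le> L"
proof -
  have "real (num_probes t (Bg n s)) < L" using HB Bg_valid[OF n1 s] t by blast
  then show ?thesis using PV_card[of t "Bg n s"] unfolding PVB_def by linarith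
qed

lemma sum_tri_bound:
  assumes HB: "\<forall>f. valid_graph 2 n f \<longrightarrow> (\<forall>t\<in>set_pmf T. real (num_probes t f) < L)" and n1: "1 \<le> n"
  shows "(\<Sum>p\<in>{1..3 * mB n}. \<Sum>s\<in>Perms n. measure_pmf.expectation T (\<lambda>t. of_bool (s p \<in> PVB n t s)))
     \<le> real (card (Perms n)) * L"
proof -
  have "measure_pmf.expectation T (\<lambda>t. \<Sum>p\<in>{1..3 * mB n}. \<Sum>s\<in>Perms n. of_bool (s p \<in> PVB n t s) :: real)
      = (\<Sum>p\<in>{1..3 * mB n}. \<Sum>s\<in>Perms n. measure_pmf.expectation T (\<lambda>t. of_bool (s p \<in> PVB n t s)))"
    by (rule EE_sum2) (rule int_ind)
  then have "(\<Sum>p\<in>{1..3 * mB n}. \<Sum>s\<in>Perms n. measure_pmf.expectation T (\<lambda>t. of_bool (s p \<in> PVB n t s)))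
      = measure_pmf.expectation T (\<lambda>t. \<Sum>p\<in>{1..3 * mB n}. \<Sum>s\<in>Perms n. of_bool (s p \<in> PVB n t s) :: real)" by simp
  also have "\<dots> \<le> real (card (Perms n)) * L"
  proof (rule EE_le_AE)
    show "integrable (measure_pmf T) (\<lambda>t. \<Sum>p\<in>{1..3 * mB n}. \<Sum>s\<in>Perms n. of_bool (s p \<in> PVB n t s) :: real)"
      by (simp add: int_ind integrable_sum)
    fix t assume t: "t \<in> set_pmf T"
    have "(\<Sum>p\<in>{1..3 * mB n}. \<Sum>s\<in>Perms n. of_bool (s p \<in> PVB n t s) :: real)
        = (\<Sum>s\<in>Perms n. \<Sum>p\<in>{1..3 * mB n}. of_bool (s p \<in> PVB n t s))" by (rule sum.swap)
    also have "\<dots> \<le> (\<Sum>s\<in>Perms n. L)"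
    proof (rule sum_mono)
      fix s assume s: "s \<in> Perms n"
      have sp: "s permutes {1..n}" using s unfolding Perms_def by simp
      have "(\<Sum>p\<in>{1..3 * mB n}. of_bool (s p \<in> PVB n t s) :: real) \<le> real (card (PVB n t s))"
        by (rule count_inj) (use permutes_inj_on[OF sp] PV_finite in \<open>auto simp: PVB_def\<close>)
      also have "\<dots> \<le> L" by (rule PVB_bound[OF HB n1 sp t])
      finally show "(\<Sum>p\<in>{1..3 * mB n}. of_bool (s p \<in> PVB n t s) :: real) \<le> L" .
    qed
    also have "\<dots> = real (card (Perms n)) * L" by simp
    finally show "(\<Sum>p\<in>{1..3 * mB n}. \<Sum>s\<in>Perms n. of_bool (s p \<in> PVB n t s) :: real) \<le> real (card (Perms n)) * L" .
  qed
  finally show ?thesis .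
qed

lemma Z_total:
  assumes DO: "diff_oblivious 2 n e d T" and n1: "1 \<le> n" and m1: "1 \<le> mB n"
    and HB: "\<forall>f. valid_graph 2 n f \<longrightarrow> (\<forall>t\<in>set_pmf T. real (num_probes t f) < L)"
  shows "(\<Sum>s\<in>Perms n. measure_pmf.expectation T (\<lambda>t. Zs n t s))
     \<le> real (n - 3 * mB n) * (exp (2 * e) * (real (card (Perms n)) * L) / real (3 * mB n)
          + real (card (Perms n)) * ((1 + exp e) * d))"
proof -
  let ?N = "real (card (Perms n))" and ?c = "(1 + exp e) * d" and ?M = "real (3 * mB n)"
  let ?X = "\<lambda>q. \<Sum>s\<in>Perms n. measure_pmf.expectation T (\<lambda>t. of_bool (s q \<in> PVB n t s))"
  have M0: "0 < ?M" using m1 by simp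
  have eq: "(\<Sum>s\<in>Perms n. measure_pmf.expectation T (\<lambda>t. Zs n t s)) = (\<Sum>q\<in>{3 * mB n + 1..n}. ?X q)"
  proof -
    have "(\<Sum>s\<in>Perms n. measure_pmf.expectation T (\<lambda>t. Zs n t s))
        = (\<Sum>s\<in>Perms n. \<Sum>q\<in>{3 * mB n + 1..n}. measure_pmf.expectation T (\<lambda>t. of_bool (s q \<in> PVB n t s)))"
      unfolding Zs_def by (rule sum.cong[OF refl], rule EE_sum) (rule int_ind)
    also have "\<dots> = (\<Sum>q\<in>{3 * mB n + 1..n}. ?X q)" by (rule sum.swap)
    finally show ?thesis .
  qed
  have Xq: "\<And>q. q \<in> {3 * mB n + 1..n} \<Longrightarrow> ?X q \<le> exp (2 * e) * (?N * L) / ?M + ?N * ?c"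
  proof -
    fix q assume q: "q \<in> {3 * mB n + 1..n}"
    have "?M * ?X q = (\<Sum>p\<in>{1..3 * mB n}. ?X q)" by simp
    also have "\<dots> \<le> (\<Sum>p\<in>{1..3 * mB n}. exp (2 * e) * (\<Sum>s\<in>Perms n. measure_pmf.expectation T (\<lambda>t. of_bool (s p \<in> PVB n t s))) + ?N * ?c)"
      by (rule sum_mono, rule sumZ_step[OF DO n1]) (use q in auto)
    also have "\<dots> = exp (2 * e) * (\<Sum>p\<in>{1..3 * mB n}. \<Sum>s\<in>Perms n. measure_pmf.expectation T (\<lambda>t. of_bool (s p \<in> PVB n t s))) + ?M * (?N * ?c)"
      by (simp add: sum.distrib sum_distrib_left)
    also have "\<dots> \<le> exp (2 * e) * (?N * L) + ?M * (?N * ?c)"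
      using sum_tri_bound[OF HB n1] by (intro add_right_mono mult_left_mono) auto
    finally have "?M * ?X q \<le> exp (2 * e) * (?N * L) + ?M * (?N * ?c)" .
    then show "?X q \<le> exp (2 * e) * (?N * L) / ?M + ?N * ?c" using M0 by (simp add: field_simps)
  qed
  have "(\<Sum>q\<in>{3 * mB n + 1..n}. ?X q) \<le> (\<Sum>q\<in>{3 * mB n + 1..n}. exp (2 * e) * (?N * L) / ?M + ?N * ?c)"
    by (rule sum_mono[OF Xq])
  also have "\<dots> = real (n - 3 * mB n) * (exp (2 * e) * (?N * L) / ?M + ?N * ?c)" by simp
  finally show ?thesis using eq by simp
qed

definition Ep :: "nat \<Rightarrow> qtree \<Rightarrow> (nat \<Rightarrow> nat) \<Rightarrow> nat \<Rightarrow> nat \<Rightarrow> bool" where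
  "Ep n t s p p' \<longleftrightarrow> s p' \<in> PVB n t s \<and> (s (piB n p) \<in> PVB n t s \<or> s (piB n (piB n p)) \<in> PVB n t s)"

lemma sumS_step:
  assumes DO: "diff_oblivious 2 n e d T" and n1: "1 \<le> n"
    and p: "1 \<le> p" "p \<le> 3 * mB n" and p': "1 \<le> p'" "p' \<le> 3 * mB n" and b: "bl p \<noteq> bl p'"
  shows "(\<Sum>s\<in>Perms n. measure_pmf.expectation T (\<lambda>t. of_bool (Ep n t s p p)))
     \<le> exp (4 * e) * (\<Sum>s\<in>Perms n. measure_pmf.expectation T (\<lambda>t. of_bool (Ep n t s p p')))
        + real (card (Perms n)) * ((1 + exp e + exp (2 * e) + exp (3 * e)) * d)"
proof -
  let ?t = "tr p p'"
  let ?c = "(1 + exp e + exp (2 * e) + exp (3 * e)) * d"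
  have m3: "3 * mB n < n" using mB_lt[OF n1] .
  have tp: "?t permutes {1..n}" by (rule permutes_swap_id) (use p p' m3 in auto)
  note pt = piB_tri[OF p]
  note pt2 = piB_tri[OF pt(1)[THEN conjunct1] pt(1)[THEN conjunct2]]
  have np1: "piB n p \<noteq> p" "piB n p \<noteq> p'" using pt(2,5) b by auto
  have np2: "piB n (piB n p) \<noteq> p" "piB n (piB n p) \<noteq> p'" using pt(3,6) b by auto
  have step: "\<And>s. s \<in> Perms n \<Longrightarrow> measure_pmf.expectation T (\<lambda>t. of_bool (Ep n t s p p))
      \<le> exp (4 * e) * measure_pmf.expectation T (\<lambda>t. of_bool (Ep n t (s \<circ> ?t) p p')) + ?c"
  proof -
    fix s assume s: "s \<in> Perms n"
    have sp: "s permutes {1..n}" using s unfolding Perms_def by simp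
    let ?S = "{ps. (\<exists>i. (s p, i) \<in> set ps) \<and> ((\<exists>i. (s (piB n p), i) \<in> set ps) \<or> (\<exists>i. (s (piB n (piB n p)), i) \<in> set ps))}"
    have c: "measure_pmf.prob (access T (Bg n s)) ?S \<le> exp (4 * e) * measure_pmf.prob (access T (Bg n (s \<circ> ?t))) ?S + ?c"
      by (rule chainS[OF DO n1 sp p p' b])
    have e1: "measure_pmf.prob (access T (Bg n s)) ?S = measure_pmf.expectation T (\<lambda>t. of_bool (Ep n t s p p))"
      unfolding prob_access Ep_def PVB_def PV_def by simp
    have v: "(s \<circ> ?t) p' = s p" "(s \<circ> ?t) (piB n p) = s (piB n p)" "(s \<circ> ?t) (piB n (piB n p)) = s (piB n (piB n p))"
      using np1 np2 by auto
    have e2: "measure_pmf.prob (access T (Bg n (s \<circ> ?t))) ?S = measure_pmf.expectation T (\<lambda>t. of_bool (Ep n t (s \<circ> ?t) p p'))"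
      unfolding prob_access Ep_def PVB_def PV_def v[symmetric] by simp
    show "measure_pmf.expectation T (\<lambda>t. of_bool (Ep n t s p p))
      \<le> exp (4 * e) * measure_pmf.expectation T (\<lambda>t. of_bool (Ep n t (s \<circ> ?t) p p')) + ?c"
      using c unfolding e1 e2 .
  qed
  have "(\<Sum>s\<in>Perms n. measure_pmf.expectation T (\<lambda>t. of_bool (Ep n t s p p)))
      \<le> (\<Sum>s\<in>Perms n. exp (4 * e) * measure_pmf.expectation T (\<lambda>t. of_bool (Ep n t (s \<circ> ?t) p p')) + ?c)"
    by (rule sum_mono[OF step])
  also have "\<dots> = exp (4 * e) * (\<Sum>s\<in>Perms n. measure_pmf.expectation T (\<lambda>t. of_bool (Ep n t (s \<circ> ?t) p p')))
      + real (card (Perms n)) * ?c"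
    by (simp add: sum.distrib sum_distrib_left)
  also have "(\<Sum>s\<in>Perms n. measure_pmf.expectation T (\<lambda>t. of_bool (Ep n t (s \<circ> ?t) p p')))
      = (\<Sum>s\<in>Perms n. measure_pmf.expectation T (\<lambda>t. of_bool (Ep n t s p p')))"
    by (rule sum_reindex_perm[OF tp, where h="\<lambda>s. measure_pmf.expectation T (\<lambda>t. of_bool (Ep n t s p p'))"])
  finally show ?thesis .
qed

lemma card_Op:
  assumes p: "1 \<le> p" "p \<le> 3 * mB n"
  shows "card {p' \<in> {1..3 * mB n}. bl p' \<noteq> bl p} = 3 * mB n - 3"
proof -
  note R = tri_rep[OF p]
  let ?c = "bl p"
  let ?B = "{3 * ?c + 1, 3 * ?c + 2, 3 * ?c + 3}"
  have eq: "{p' \<in> {1..3 * mB n}. bl p' \<noteq> bl p} = {1..3 * mB n} - ?B"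
  proof (rule set_eqI)
    fix x
    show "x \<in> {p' \<in> {1..3 * mB n}. bl p' \<noteq> bl p} \<longleftrightarrow> x \<in> {1..3 * mB n} - ?B"
    proof
      assume x: "x \<in> {p' \<in> {1..3 * mB n}. bl p' \<noteq> bl p}"
      have bb: "bl (3 * ?c + 1) = ?c" "bl (3 * ?c + 2) = ?c" "bl (3 * ?c + 3) = ?c"
        by (simp_all add: bl_def div3s)
      then have "x \<notin> ?B" using x by auto
      then show "x \<in> {1..3 * mB n} - ?B" using x by auto
    next
      assume x: "x \<in> {1..3 * mB n} - ?B"
      then have x1: "1 \<le> x" "x \<le> 3 * mB n" by auto
      note Rx = tri_rep[OF x1]
      have "bl x \<noteq> bl p"
      proof
        assume "bl x = bl p"
        then have "x = 3 * ?c + off x + 1" using Rx(1) by simp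
        moreover have "off x = 0 \<or> off x = 1 \<or> off x = 2" using Rx(3) by auto
        ultimately have "x \<in> ?B" by auto
        then show False using x by auto
      qed
      then show "x \<in> {p' \<in> {1..3 * mB n}. bl p' \<noteq> bl p}" using x1 by auto
    qed
  qed
  have sub: "?B \<subseteq> {1..3 * mB n}" using R(2) by auto
  have cB: "card ?B = 3" by simp
  show ?thesis unfolding eq using card_Diff_subset[OF _ sub] cB by simp
qed

lemma EE_nonneg: "0 \<le> measure_pmf.expectation T (\<lambda>t. of_bool (P t) :: real)"
  by (rule integral_nonneg_AE) auto

lemma pair_bound:
  assumes HB: "\<forall>f. valid_graph 2 n f \<longrightarrow> (\<forall>t\<in>set_pmf T. real (num_probes t f) < L)" and n1: "1 \<le> n"
  shows "(\<Sum>p\<in>{1..3 * mB n}. \<Sum>p'\<in>{1..3 * mB n}. \<Sum>s\<in>Perms n. measure_pmf.expectation T (\<lambda>t. of_bool (Ep n t s p p')))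
     \<le> real (card (Perms n)) * (2 * L\<^sup>2)"
proof -
  let ?A = "{1..3 * mB n}"
  let ?g = "\<lambda>p p' s t. of_bool (Ep n t s p p') :: real"
  have "(\<Sum>p\<in>?A. \<Sum>p'\<in>?A. \<Sum>s\<in>Perms n. measure_pmf.expectation T (?g p p' s))
      = (\<Sum>p\<in>?A. measure_pmf.expectation T (\<lambda>t. \<Sum>p'\<in>?A. \<Sum>s\<in>Perms n. ?g p p' s t))"
    by (rule sum.cong[OF refl], rule EE_sum2[symmetric]) (rule int_ind)
  also have "\<dots> = measure_pmf.expectation T (\<lambda>t. \<Sum>p\<in>?A. \<Sum>p'\<in>?A. \<Sum>s\<in>Perms n. ?g p p' s t)"
    by (rule EE_sum[symmetric]) (simp add: int_ind integrable_sum)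
  also have "\<dots> \<le> real (card (Perms n)) * (2 * L\<^sup>2)"
  proof (rule EE_le_AE)
    show "integrable (measure_pmf T) (\<lambda>t. \<Sum>p\<in>?A. \<Sum>p'\<in>?A. \<Sum>s\<in>Perms n. ?g p p' s t)"
      by (simp add: int_ind integrable_sum)
    fix t assume t: "t \<in> set_pmf T"
    have "(\<Sum>p\<in>?A. \<Sum>p'\<in>?A. \<Sum>s\<in>Perms n. ?g p p' s t) = (\<Sum>p\<in>?A. \<Sum>s\<in>Perms n. \<Sum>p'\<in>?A. ?g p p' s t)"
      by (rule sum.cong[OF refl], rule sum.swap)
    also have "\<dots> = (\<Sum>s\<in>Perms n. \<Sum>p\<in>?A. \<Sum>p'\<in>?A. ?g p p' s t)" by (rule sum.swap)
    also have "\<dots> \<le> (\<Sum>s\<in>Perms n. 2 * L\<^sup>2)"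
    proof (rule sum_mono)
      fix s assume s: "s \<in> Perms n"
      have sp: "s permutes {1..n}" using s unfolding Perms_def by simp
      let ?W = "PVB n t s"
      have fW: "finite ?W" unfolding PVB_def by (rule PV_finite)
      have cW: "real (card ?W) \<le> L" by (rule PVB_bound[OF HB n1 sp t])
      have injs: "inj_on s ?A" using permutes_inj_on[OF sp] by auto
      have injB: "inj (piB n)" using permutes_inj[OF piB_perm[OF n1]] .
      have injS: "inj s" by (rule permutes_inj[OF sp])
      have c1: "inj (s \<circ> piB n)" by (rule inj_compose[OF injS injB])
      have c2: "inj (s \<circ> piB n \<circ> piB n)" by (rule inj_compose[OF c1 injB])
      have i1: "inj_on (\<lambda>p. s (piB n p)) ?A"
        using inj_on_subset[OF c1 subset_UNIV] by (simp add: comp_def)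
      have i2: "inj_on (\<lambda>p. s (piB n (piB n p))) ?A"
        using inj_on_subset[OF c2 subset_UNIV] by (simp add: comp_def)
      have b0: "(\<Sum>p'\<in>?A. of_bool (s p' \<in> ?W) :: real) \<le> L"
        using count_inj[OF injs fW] cW by linarith
      have b1: "(\<Sum>p\<in>?A. of_bool (s (piB n p) \<in> ?W) :: real) \<le> L"
        using count_inj[OF i1 fW] cW by linarith
      have b2: "(\<Sum>p\<in>?A. of_bool (s (piB n (piB n p)) \<in> ?W) :: real) \<le> L"
        using count_inj[OF i2 fW] cW by linarith
      have "(\<Sum>p\<in>?A. \<Sum>p'\<in>?A. ?g p p' s t)
          \<le> (\<Sum>p\<in>?A. \<Sum>p'\<in>?A. (of_bool (s (piB n p) \<in> ?W) + of_bool (s (piB n (piB n p)) \<in> ?W)) * of_bool (s p' \<in> ?W))"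
        by (intro sum_mono) (auto simp: Ep_def)
      also have "\<dots> = (\<Sum>p\<in>?A. of_bool (s (piB n p) \<in> ?W) + of_bool (s (piB n (piB n p)) \<in> ?W)) * (\<Sum>p'\<in>?A. of_bool (s p' \<in> ?W))"
        by (rule sum_product[symmetric])
      also have "\<dots> \<le> (2 * L) * L"
      proof (rule mult_mono)
        show "(\<Sum>p\<in>?A. of_bool (s (piB n p) \<in> ?W) + of_bool (s (piB n (piB n p)) \<in> ?W) :: real) \<le> 2 * L"
          using b1 b2 by (simp add: sum.distrib)
        show "(\<Sum>p'\<in>?A. of_bool (s p' \<in> ?W) :: real) \<le> L" by (rule b0)
        show "0 \<le> 2 * L" using cW by linarith
        show "0 \<le> (\<Sum>p'\<in>?A. of_bool (s p' \<in> ?W) :: real)" by (rule sum_nonneg) auto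
      qed
      finally show "(\<Sum>p\<in>?A. \<Sum>p'\<in>?A. ?g p p' s t) \<le> 2 * L\<^sup>2" by (simp add: power2_eq_square)
    qed
    also have "\<dots> = real (card (Perms n)) * (2 * L\<^sup>2)" by simp
    finally show "(\<Sum>p\<in>?A. \<Sum>p'\<in>?A. \<Sum>s\<in>Perms n. ?g p p' s t) \<le> real (card (Perms n)) * (2 * L\<^sup>2)" .
  qed
  finally show ?thesis .
qed

lemma S_total:
  assumes DO: "diff_oblivious 2 n e d T" and n1: "1 \<le> n" and m2: "2 \<le> mB n"
    and HB: "\<forall>f. valid_graph 2 n f \<longrightarrow> (\<forall>t\<in>set_pmf T. real (num_probes t f) < L)"
  shows "(\<Sum>s\<in>Perms n. measure_pmf.expectation T (\<lambda>t. Ss n t s))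
     \<le> exp (4 * e) * (real (card (Perms n)) * (2 * L\<^sup>2)) / real (3 * mB n - 3)
        + real (3 * mB n) * (real (card (Perms n)) * ((1 + exp e + exp (2 * e) + exp (3 * e)) * d))"
proof -
  let ?A = "{1..3 * mB n}" and ?N = "real (card (Perms n))" and ?c = "(1 + exp e + exp (2 * e) + exp (3 * e)) * d"
  let ?K = "real (3 * mB n - 3)"
  let ?X = "\<lambda>p. \<Sum>s\<in>Perms n. measure_pmf.expectation T (\<lambda>t. of_bool (Ep n t s p p) :: real)"
  let ?Y = "\<lambda>p p'. \<Sum>s\<in>Perms n. measure_pmf.expectation T (\<lambda>t. of_bool (Ep n t s p p') :: real)"
  have K0: "0 < ?K" using m2 by simp
  have Y0: "\<And>p p'. 0 \<le> ?Y p p'" by (intro sum_nonneg EE_nonneg)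
  have eq: "(\<Sum>s\<in>Perms n. measure_pmf.expectation T (\<lambda>t. Ss n t s)) = (\<Sum>p\<in>?A. ?X p)"
  proof -
    have "(\<Sum>s\<in>Perms n. measure_pmf.expectation T (\<lambda>t. Ss n t s))
        = (\<Sum>s\<in>Perms n. \<Sum>p\<in>?A. measure_pmf.expectation T (\<lambda>t. of_bool (Ep n t s p p)))"
      unfolding Ss_def Ep_def by (rule sum.cong[OF refl], rule EE_sum) (rule int_ind)
    also have "\<dots> = (\<Sum>p\<in>?A. ?X p)" by (rule sum.swap)
    finally show ?thesis .
  qed
  have Xp: "\<And>p. p \<in> ?A \<Longrightarrow> ?X p \<le> exp (4 * e) * (\<Sum>p'\<in>?A. ?Y p p') / ?K + ?N * ?c"
  proof -
    fix p assume p: "p \<in> ?A"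
    let ?O = "{p' \<in> ?A. bl p' \<noteq> bl p}"
    have cO: "card ?O = 3 * mB n - 3" using card_Op p by auto
    have "?K * ?X p = (\<Sum>p'\<in>?O. ?X p)" using cO by simp
    also have "\<dots> \<le> (\<Sum>p'\<in>?O. exp (4 * e) * ?Y p p' + ?N * ?c)"
      by (rule sum_mono, rule sumS_step[OF DO n1]) (use p in auto)
    also have "\<dots> = exp (4 * e) * (\<Sum>p'\<in>?O. ?Y p p') + ?K * (?N * ?c)"
      using cO by (simp add: sum.distrib sum_distrib_left)
    also have "\<dots> \<le> exp (4 * e) * (\<Sum>p'\<in>?A. ?Y p p') + ?K * (?N * ?c)"
      by (intro add_right_mono mult_left_mono sum_mono2) (auto simp: Y0)
    finally have "?K * ?X p \<le> exp (4 * e) * (\<Sum>p'\<in>?A. ?Y p p') + ?K * (?N * ?c)" .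
    then show "?X p \<le> exp (4 * e) * (\<Sum>p'\<in>?A. ?Y p p') / ?K + ?N * ?c" using K0 by (simp add: field_simps)
  qed
  have "(\<Sum>p\<in>?A. ?X p) \<le> (\<Sum>p\<in>?A. exp (4 * e) * (\<Sum>p'\<in>?A. ?Y p p') / ?K + ?N * ?c)"
    by (rule sum_mono[OF Xp])
  also have "\<dots> = exp (4 * e) * (\<Sum>p\<in>?A. \<Sum>p'\<in>?A. ?Y p p') / ?K + real (3 * mB n) * (?N * ?c)"
    by (simp add: sum.distrib sum_distrib_left sum_divide_distrib)
  also have "\<dots> \<le> exp (4 * e) * (?N * (2 * L\<^sup>2)) / ?K + real (3 * mB n) * (?N * ?c)"
    using pair_bound[OF HB n1] K0 by (intro add_right_mono divide_right_mono mult_left_mono) auto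
  finally show ?thesis using eq by simp
qed

lemma sum3r: "(\<Sum>k\<in>{1..3*m}. h k) = (\<Sum>q<m. h (3*q+1) + h (3*q+2) + h (3*q+3))" for m :: nat and h :: "nat \<Rightarrow> real"
proof (induction m)
  case 0 then show ?case by simp
next
  case (Suc m)
  have e: "{1..3 * Suc m} = {1..3*m} \<union> {3*m+1, 3*m+2, 3*m+3}" by auto
  have "(\<Sum>k\<in>{1..3 * Suc m}. h k) = (\<Sum>k\<in>{1..3*m}. h k) + (\<Sum>k\<in>{3*m+1, 3*m+2, 3*m+3}. h k)"
    unfolding e by (rule sum.union_disjoint) auto
  also have "(\<Sum>k\<in>{3*m+1, 3*m+2, 3*m+3}. h k) = h (3*m+1) + h (3*m+2) + h (3*m+3)" by simp
  finally show ?case using Suc by simp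
qed

lemma blk_count:
  assumes s: "s permutes {1..n}"
  shows "(\<Sum>k<mB n. of_bool (blkp n t s k) :: real) \<le> real (card (PVB n t s))"
proof -
  let ?W = "PVB n t s"
  have "(\<Sum>k<mB n. of_bool (blkp n t s k) :: real)
      \<le> (\<Sum>k<mB n. of_bool (s (3*k+1) \<in> ?W) + of_bool (s (3*k+2) \<in> ?W) + of_bool (s (3*k+3) \<in> ?W))"
  proof (rule sum_mono)
    fix k
    have eqs: "3*k+(0::nat)+1 = 3*k+1" "3*k+(1::nat)+1 = 3*k+2" "3*k+(2::nat)+1 = 3*k+3" by simp_all
    have "blkp n t s k \<longleftrightarrow> s (3*k+1) \<in> ?W \<or> s (3*k+2) \<in> ?W \<or> s (3*k+3) \<in> ?W"
    proof
      assume "blkp n t s k"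
      then obtain j where j: "j < 3" "s (3 * k + j + 1) \<in> ?W" unfolding blkp_def by blast
      then have "j = 0 \<or> j = 1 \<or> j = 2" by auto
      then show "s (3*k+1) \<in> ?W \<or> s (3*k+2) \<in> ?W \<or> s (3*k+3) \<in> ?W" using j(2) eqs by metis
    next
      assume h: "s (3*k+1) \<in> ?W \<or> s (3*k+2) \<in> ?W \<or> s (3*k+3) \<in> ?W"
      have l: "(0::nat) < 3" "(1::nat) < 3" "(2::nat) < 3" by simp_all
      show "blkp n t s k" unfolding blkp_def using h eqs l by metis
    qed
    then show "(of_bool (blkp n t s k) :: real) \<le> of_bool (s (3*k+1) \<in> ?W) + of_bool (s (3*k+2) \<in> ?W) + of_bool (s (3*k+3) \<in> ?W)"
      by auto
  qed
  also have "\<dots> = (\<Sum>p\<in>{1..3 * mB n}. of_bool (s p \<in> ?W))"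
    by (rule sum3r[symmetric])
  also have "\<dots> \<le> real (card ?W)"
    by (rule count_inj) (use permutes_inj_on[OF s] PV_finite in \<open>auto simp: PVB_def\<close>)
  finally show ?thesis .
qed

lemma blk_swap_eq:
  assumes n1: "1 \<le> n" and m2: "2 \<le> mB n" and k: "k < mB n" and k': "k' < mB n" "k' \<noteq> k"
  shows "(\<Sum>s\<in>Perms n. of_bool (blkp n t s k \<and> blkp n t s (nx (mB n) k)) :: real)
       = (\<Sum>s\<in>Perms n. of_bool (blkp n t s k \<and> blkp n t s k'))"
proof (cases "k' = nx (mB n) k")
  case True then show ?thesis by simp
next
  case False
  let ?a = "nx (mB n) k"
  have a: "?a < mB n" "?a \<noteq> k" using k m2 unfolding nx_def by auto
  let ?b = "bt n ?a k'"
  have bp: "?b permutes {1..n}" by (rule bt_perm[OF a(1) k'(1)])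
  have "(\<Sum>s\<in>Perms n. of_bool (blkp n t s k \<and> blkp n t s ?a) :: real)
      = (\<Sum>s\<in>Perms n. of_bool (blkp n t (s \<circ> ?b) k \<and> blkp n t (s \<circ> ?b) ?a))"
    by (rule sum_reindex_perm[OF bp, symmetric])
  also have "\<dots> = (\<Sum>s\<in>Perms n. of_bool (blkp n t s k \<and> blkp n t s k'))"
  proof (rule sum.cong[OF refl])
    fix s assume s: "s \<in> Perms n"
    have sp: "s permutes {1..n}" using s unfolding Perms_def by simp
    have W: "PVB n t (s \<circ> ?b) = PVB n t s" unfolding PVB_def using Bg_bt[OF a(1) k'(1) sp n1] by simp
    have ba: "\<And>j. j < 3 \<Longrightarrow> ?b (3 * ?a + j + 1) = 3 * k' + j + 1" using bt_vals(1)[OF a(1) k'(1)] by blast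
    have bk: "\<And>j. j < 3 \<Longrightarrow> ?b (3 * k + j + 1) = 3 * k + j + 1" using bt_other[OF a(2)[symmetric] k'(2)[symmetric]] by blast
    have e1: "blkp n t (s \<circ> ?b) ?a \<longleftrightarrow> blkp n t s k'" unfolding blkp_def W using ba by auto
    have e2: "blkp n t (s \<circ> ?b) k \<longleftrightarrow> blkp n t s k" unfolding blkp_def W using bk by auto
    show "(of_bool (blkp n t (s \<circ> ?b) k \<and> blkp n t (s \<circ> ?b) ?a) :: real) = of_bool (blkp n t s k \<and> blkp n t s k')"
      using e1 e2 by simp
  qed
  finally show ?thesis .
qed

lemma A_bound:
  assumes HB: "\<forall>f. valid_graph 2 n f \<longrightarrow> (\<forall>t\<in>set_pmf T. real (num_probes t f) < L)"
    and n1: "1 \<le> n" and m2: "2 \<le> mB n" and t: "t \<in> set_pmf T"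
  shows "(\<Sum>s\<in>Perms n. As n t s) \<le> real (card (Perms n)) * L\<^sup>2 / real (mB n - 1)"
proof -
  let ?m = "mB n" and ?N = "real (card (Perms n))"
  let ?B = "\<lambda>s k. of_bool (blkp n t s k) :: real"
  have M0: "0 < real (?m - 1)" using m2 by simp
  have eq: "(\<Sum>s\<in>Perms n. As n t s) = (\<Sum>k<?m. \<Sum>s\<in>Perms n. of_bool (blkp n t s k \<and> blkp n t s (nx ?m k)) :: real)"
    unfolding As_def by (rule sum.swap)
  have each: "\<And>k. k < ?m \<Longrightarrow> real (?m - 1) * (\<Sum>s\<in>Perms n. of_bool (blkp n t s k \<and> blkp n t s (nx ?m k)) :: real)
      \<le> (\<Sum>k'<?m. \<Sum>s\<in>Perms n. ?B s k * ?B s k')"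
  proof -
    fix k assume k: "k < ?m"
    have c: "card ({..<?m} - {k}) = ?m - 1" using k by simp
    have "real (?m - 1) * (\<Sum>s\<in>Perms n. of_bool (blkp n t s k \<and> blkp n t s (nx ?m k)) :: real)
        = (\<Sum>k'\<in>{..<?m} - {k}. \<Sum>s\<in>Perms n. of_bool (blkp n t s k \<and> blkp n t s (nx ?m k)) :: real)"
      using c by simp
    also have "\<dots> = (\<Sum>k'\<in>{..<?m} - {k}. \<Sum>s\<in>Perms n. of_bool (blkp n t s k \<and> blkp n t s k') :: real)"
      by (rule sum.cong[OF refl], rule blk_swap_eq[OF n1 m2 k]) auto
    also have "\<dots> \<le> (\<Sum>k'<?m. \<Sum>s\<in>Perms n. of_bool (blkp n t s k \<and> blkp n t s k') :: real)"
      by (rule sum_mono2) (auto intro: sum_nonneg)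
    also have "\<dots> = (\<Sum>k'<?m. \<Sum>s\<in>Perms n. ?B s k * ?B s k')" by (simp add: of_bool_conj)
    finally show "real (?m - 1) * (\<Sum>s\<in>Perms n. of_bool (blkp n t s k \<and> blkp n t s (nx ?m k)) :: real)
      \<le> (\<Sum>k'<?m. \<Sum>s\<in>Perms n. ?B s k * ?B s k')" .
  qed
  have "real (?m - 1) * (\<Sum>s\<in>Perms n. As n t s)
      = (\<Sum>k<?m. real (?m - 1) * (\<Sum>s\<in>Perms n. of_bool (blkp n t s k \<and> blkp n t s (nx ?m k)) :: real))"
    unfolding eq by (simp add: sum_distrib_left)
  also have "\<dots> \<le> (\<Sum>k<?m. \<Sum>k'<?m. \<Sum>s\<in>Perms n. ?B s k * ?B s k')"
    by (rule sum_mono[OF each]) simp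
  also have "\<dots> = (\<Sum>s\<in>Perms n. (\<Sum>k<?m. ?B s k) * (\<Sum>k'<?m. ?B s k'))"
  proof -
    have "(\<Sum>k<?m. \<Sum>k'<?m. \<Sum>s\<in>Perms n. ?B s k * ?B s k') = (\<Sum>k<?m. \<Sum>s\<in>Perms n. \<Sum>k'<?m. ?B s k * ?B s k')"
      by (rule sum.cong[OF refl], rule sum.swap)
    also have "\<dots> = (\<Sum>s\<in>Perms n. \<Sum>k<?m. \<Sum>k'<?m. ?B s k * ?B s k')" by (rule sum.swap)
    also have "\<dots> = (\<Sum>s\<in>Perms n. (\<Sum>k<?m. ?B s k) * (\<Sum>k'<?m. ?B s k'))"
      by (rule sum.cong[OF refl], rule sum_product[symmetric])
    finally show ?thesis .
  qed
  also have "\<dots> \<le> (\<Sum>s\<in>Perms n. L * L)"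
  proof (rule sum_mono)
    fix s assume s: "s \<in> Perms n"
    have sp: "s permutes {1..n}" using s unfolding Perms_def by simp
    have b: "(\<Sum>k<?m. ?B s k) \<le> L" using blk_count[OF sp, of t] PVB_bound[OF HB n1 sp t] by linarith
    have z: "0 \<le> (\<Sum>k<?m. ?B s k)" by (rule sum_nonneg) auto
    show "(\<Sum>k<?m. ?B s k) * (\<Sum>k'<?m. ?B s k') \<le> L * L" using b z by (intro mult_mono) auto
  qed
  also have "\<dots> = ?N * L\<^sup>2" by (simp add: power2_eq_square)
  finally have "real (?m - 1) * (\<Sum>s\<in>Perms n. As n t s) \<le> ?N * L\<^sup>2" .
  then show ?thesis using M0 by (simp add: field_simps)
qed

lemma A_total:
  assumes HB: "\<forall>f. valid_graph 2 n f \<longrightarrow> (\<forall>t\<in>set_pmf T. real (num_probes t f) < L)"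
    and n1: "1 \<le> n" and m2: "2 \<le> mB n"
  shows "(\<Sum>s\<in>Perms n. measure_pmf.expectation T (\<lambda>t. As n t s)) \<le> real (card (Perms n)) * L\<^sup>2 / real (mB n - 1)"
proof -
  have iA: "\<And>s. integrable (measure_pmf T) (\<lambda>t. As n t s)" unfolding As_def by (intro Bochner_Integration.integrable_sum int_ind)
  have iS: "integrable (measure_pmf T) (\<lambda>t. \<Sum>s\<in>Perms n. As n t s)" by (intro Bochner_Integration.integrable_sum iA)
  have "(\<Sum>s\<in>Perms n. measure_pmf.expectation T (\<lambda>t. As n t s)) = measure_pmf.expectation T (\<lambda>t. \<Sum>s\<in>Perms n. As n t s)"
    by (rule EE_sum[symmetric]) (rule iA)
  also have "\<dots> \<le> real (card (Perms n)) * L\<^sup>2 / real (mB n - 1)"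
    by (rule EE_le_AE[OF iS]) (rule A_bound[OF HB n1 m2])
  finally show ?thesis .
qed

lemma sum_ofbool_card: "finite A \<Longrightarrow> (\<Sum>s\<in>A. of_bool (P s) :: real) = real (card {s \<in> A. P s})"
  by (simp add: of_bool_def sum.If_cases Int_def)

lemma main_ineq:
  assumes DO: "diff_oblivious 2 n e d T" and TS: "is_tester 2 n (3/4) (1/3) T"
    and HB: "\<forall>f. valid_graph 2 n f \<longrightarrow> (\<forall>t\<in>set_pmf T. real (num_probes t f) < L)"
    and n1: "1 \<le> n" and m3: "3 \<le> mB n"
  shows "1/2 \<le> real (n - 3 * mB n) * (exp (2 * e) * L / real (3 * mB n) + (1 + exp e) * d)
     + exp (4 * e) * (2 * L\<^sup>2) / real (3 * mB n - 3)
     + real (3 * mB n) * ((1 + exp e + exp (2 * e) + exp (3 * e)) * d)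
     + L\<^sup>2 / real (mB n - 1)"
proof -
  let ?P = "Perms n" and ?N = "real (card (Perms n))"
  have n4: "4 \<le> n" using m3 mB_lt[OF n1] by linarith
  have n3: "3 \<le> n" using n4 by simp
  have m2: "2 \<le> mB n" using m3 by simp
  have m1: "1 \<le> mB n" using m3 by simp
  have N0: "0 < ?N" using Perms_finite[of n] unfolding Perms_def
    by (metis (mono_tags) card_gt_0_iff empty_iff mem_Collect_eq of_nat_0_less_iff permutes_id)
  let ?FB = "\<lambda>s t. of_bool (snd (run t (Bg n s)) = False) :: real"
  let ?FA = "\<lambda>s t. of_bool (snd (run t (Ag n s)) = False) :: real"
  have tB: "\<And>s. s \<in> ?P \<Longrightarrow> 3/4 \<le> measure_pmf.expectation T (?FB s)"
  proof -
    fix s assume s: "s \<in> ?P"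
    have sp: "s permutes {1..n}" using s unfolding Perms_def by simp
    have "valid_graph 2 n (Bg n s) \<and> far 2 n (1/3) (Bg n s)" using Bg_valid[OF n1 sp] far_Bg[OF n4 sp] by simp
    then have "3/4 \<le> measure_pmf.prob (tester_output T (Bg n s)) {False}" using TS unfolding is_tester_def by blast
    then show "3/4 \<le> measure_pmf.expectation T (?FB s)" unfolding prob_out .
  qed
  have tA: "\<And>s. s \<in> ?P \<Longrightarrow> measure_pmf.expectation T (?FA s) \<le> 1/4"
  proof -
    fix s assume s: "s \<in> ?P"
    have sp: "s permutes {1..n}" using s unfolding Perms_def by simp
    have ip: "in_P 2 n (Ag n s)" by (rule inP_Ag[OF n3 sp])
    have "valid_graph 2 n (Ag n s)" using ip unfolding in_P_def by simp
    then have "3/4 \<le> measure_pmf.prob (tester_output T (Ag n s)) {True}" using TS ip unfolding is_tester_def by blast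
    then have h: "3/4 \<le> measure_pmf.expectation T (\<lambda>t. of_bool (snd (run t (Ag n s)) = True) :: real)" unfolding prob_out .
    have "measure_pmf.expectation T (?FA s) = measure_pmf.expectation T (\<lambda>t. 1 - of_bool (snd (run t (Ag n s)) = True) :: real)"
      by (rule Bochner_Integration.integral_cong) auto
    also have "\<dots> = 1 - measure_pmf.expectation T (\<lambda>t. of_bool (snd (run t (Ag n s)) = True) :: real)"
      by (subst Bochner_Integration.integral_diff) (auto intro: int_ind)
    finally show "measure_pmf.expectation T (?FA s) \<le> 1/4" using h by simp
  qed
  have iZ: "\<And>s. integrable (measure_pmf T) (\<lambda>t. Zs n t s)" unfolding Zs_def by (intro Bochner_Integration.integrable_sum int_ind)
  have iS: "\<And>s. integrable (measure_pmf T) (\<lambda>t. Ss n t s)" unfolding Ss_def by (intro Bochner_Integration.integrable_sum int_ind)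
  have iA: "\<And>s. integrable (measure_pmf T) (\<lambda>t. As n t s)" unfolding As_def by (intro Bochner_Integration.integrable_sum int_ind)
  have iF: "\<And>s. integrable (measure_pmf T) (\<lambda>t. ?FA s t + (Zs n t s + Ss n t s + As n t s))"
    by (intro Bochner_Integration.integrable_add int_ind iZ iS iA)
  have iFB: "\<And>s. integrable (measure_pmf T) (?FB s)" by (rule int_ind)
  have point: "\<And>t. (\<Sum>s\<in>?P. ?FB s t) \<le> (\<Sum>s\<in>?P. ?FA s t + (Zs n t s + Ss n t s + As n t s))"
  proof -
    fix t
    have "(\<Sum>s\<in>?P. ?FB s t) \<le> (\<Sum>s\<in>?P. of_bool (snd (run t (Bg n s)) = False \<and> good n t s) + of_bool (\<not> good n t s) :: real)"
      by (rule sum_mono) auto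
    also have "\<dots> = (\<Sum>s\<in>?P. of_bool (snd (run t (Bg n s)) = False \<and> good n t s) :: real) + (\<Sum>s\<in>?P. of_bool (\<not> good n t s))"
      by (rule sum.distrib)
    also have "(\<Sum>s\<in>?P. of_bool (snd (run t (Bg n s)) = False \<and> good n t s) :: real) \<le> (\<Sum>s\<in>?P. ?FA s t)"
      unfolding sum_ofbool_card[OF Perms_finite] using count_coupling[OF n1 m3, of t False] by simp
    also have "(\<Sum>s\<in>?P. of_bool (\<not> good n t s) :: real) \<le> (\<Sum>s\<in>?P. Zs n t s + Ss n t s + As n t s)"
    proof (rule sum_mono)
      fix s assume s: "s \<in> ?P"
      have sp: "s permutes {1..n}" using s unfolding Perms_def by simp
      have Zn: "0 \<le> Zs n t s" unfolding Zs_def by (rule sum_nonneg) auto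
      have Sn: "0 \<le> Ss n t s" unfolding Ss_def by (rule sum_nonneg) auto
      have An: "0 \<le> As n t s" unfolding As_def by (rule sum_nonneg) auto
      show "(of_bool (\<not> good n t s) :: real) \<le> Zs n t s + Ss n t s + As n t s"
        using bad_le[OF n1 m3 sp, of t] Zn Sn An by (cases "good n t s") auto
    qed
    finally show "(\<Sum>s\<in>?P. ?FB s t) \<le> (\<Sum>s\<in>?P. ?FA s t + (Zs n t s + Ss n t s + As n t s))"
      by (simp add: sum.distrib)
  qed
  have "3/4 * ?N = (\<Sum>s\<in>?P. (3/4 :: real))" by simp
  also have "\<dots> \<le> (\<Sum>s\<in>?P. measure_pmf.expectation T (?FB s))" by (rule sum_mono[OF tB])
  also have "\<dots> = measure_pmf.expectation T (\<lambda>t. \<Sum>s\<in>?P. ?FB s t)" by (rule EE_sum[symmetric]) (rule int_ind)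
  also have "\<dots> \<le> measure_pmf.expectation T (\<lambda>t. \<Sum>s\<in>?P. ?FA s t + (Zs n t s + Ss n t s + As n t s))"
    by (rule integral_mono[OF Bochner_Integration.integrable_sum[OF iFB] Bochner_Integration.integrable_sum[OF iF] point])
  also have "\<dots> = (\<Sum>s\<in>?P. measure_pmf.expectation T (?FA s)) + (\<Sum>s\<in>?P. measure_pmf.expectation T (\<lambda>t. Zs n t s))
      + (\<Sum>s\<in>?P. measure_pmf.expectation T (\<lambda>t. Ss n t s)) + (\<Sum>s\<in>?P. measure_pmf.expectation T (\<lambda>t. As n t s))"
  proof -
    have "measure_pmf.expectation T (\<lambda>t. \<Sum>s\<in>?P. ?FA s t + (Zs n t s + Ss n t s + As n t s))
        = (\<Sum>s\<in>?P. measure_pmf.expectation T (\<lambda>t. ?FA s t + (Zs n t s + Ss n t s + As n t s)))"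
      by (rule EE_sum) (rule iF)
    also have "\<dots> = (\<Sum>s\<in>?P. measure_pmf.expectation T (?FA s) + measure_pmf.expectation T (\<lambda>t. Zs n t s)
        + measure_pmf.expectation T (\<lambda>t. Ss n t s) + measure_pmf.expectation T (\<lambda>t. As n t s))"
    proof (rule sum.cong[OF refl])
      fix s
      have "measure_pmf.expectation T (\<lambda>t. ?FA s t + (Zs n t s + Ss n t s + As n t s))
          = measure_pmf.expectation T (?FA s) + measure_pmf.expectation T (\<lambda>t. Zs n t s + Ss n t s + As n t s)"
        by (rule Bochner_Integration.integral_add) (intro int_ind, intro Bochner_Integration.integrable_add iZ iS iA)
      also have "measure_pmf.expectation T (\<lambda>t. Zs n t s + Ss n t s + As n t s)
          = measure_pmf.expectation T (\<lambda>t. Zs n t s + Ss n t s) + measure_pmf.expectation T (\<lambda>t. As n t s)"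
        by (rule Bochner_Integration.integral_add) (intro Bochner_Integration.integrable_add iZ iS, rule iA)
      also have "measure_pmf.expectation T (\<lambda>t. Zs n t s + Ss n t s)
          = measure_pmf.expectation T (\<lambda>t. Zs n t s) + measure_pmf.expectation T (\<lambda>t. Ss n t s)"
        by (rule Bochner_Integration.integral_add) (rule iZ, rule iS)
      finally show "measure_pmf.expectation T (\<lambda>t. ?FA s t + (Zs n t s + Ss n t s + As n t s))
        = measure_pmf.expectation T (?FA s) + measure_pmf.expectation T (\<lambda>t. Zs n t s)
        + measure_pmf.expectation T (\<lambda>t. Ss n t s) + measure_pmf.expectation T (\<lambda>t. As n t s)" by simp
    qed
    also have "\<dots> = (\<Sum>s\<in>?P. measure_pmf.expectation T (?FA s)) + (\<Sum>s\<in>?P. measure_pmf.expectation T (\<lambda>t. Zs n t s))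
      + (\<Sum>s\<in>?P. measure_pmf.expectation T (\<lambda>t. Ss n t s)) + (\<Sum>s\<in>?P. measure_pmf.expectation T (\<lambda>t. As n t s))"
      by (simp add: sum.distrib)
    finally show ?thesis .
  qed
  also have "(\<Sum>s\<in>?P. measure_pmf.expectation T (?FA s)) \<le> (\<Sum>s\<in>?P. 1/4)" by (rule sum_mono[OF tA])
  also have "(\<Sum>s\<in>?P. measure_pmf.expectation T (\<lambda>t. Zs n t s))
      \<le> real (n - 3 * mB n) * (exp (2 * e) * (?N * L) / real (3 * mB n) + ?N * ((1 + exp e) * d))"
    by (rule Z_total[OF DO n1 m1 HB])
  also have "(\<Sum>s\<in>?P. measure_pmf.expectation T (\<lambda>t. Ss n t s))
      \<le> exp (4 * e) * (?N * (2 * L\<^sup>2)) / real (3 * mB n - 3) + real (3 * mB n) * (?N * ((1 + exp e + exp (2 * e) + exp (3 * e)) * d))"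
    by (rule S_total[OF DO n1 m2 HB])
  also have "(\<Sum>s\<in>?P. measure_pmf.expectation T (\<lambda>t. As n t s)) \<le> ?N * L\<^sup>2 / real (mB n - 1)"
    by (rule A_total[OF HB n1 m2])
  finally have h: "3/4 * ?N \<le> ?N / 4 + ?N * (real (n - 3 * mB n) * (exp (2 * e) * L / real (3 * mB n) + (1 + exp e) * d)
     + exp (4 * e) * (2 * L\<^sup>2) / real (3 * mB n - 3)
     + real (3 * mB n) * ((1 + exp e + exp (2 * e) + exp (3 * e)) * d)
     + L\<^sup>2 / real (mB n - 1))"
    by (simp add: algebra_simps)
  then have "?N * (1/2) \<le> ?N * (real (n - 3 * mB n) * (exp (2 * e) * L / real (3 * mB n) + (1 + exp e) * d)
     + exp (4 * e) * (2 * L\<^sup>2) / real (3 * mB n - 3)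
     + real (3 * mB n) * ((1 + exp e + exp (2 * e) + exp (3 * e)) * d)
     + L\<^sup>2 / real (mB n - 1))" by linarith
  then show ?thesis using N0 by (simp only: mult_le_cancel_left_pos)
qed

lemma final_arith:
  fixes c L E2 E4 e1 e3 d mr nr sr :: real
  assumes c: "c = 1/16" and m: "133 \<le> mr" and n: "nr = 3 * mr + sr" and s: "1 \<le> sr" "sr \<le> 3"
    and E2: "1 \<le> E2" and E4: "E4 = E2 * E2" and e1: "1 \<le> e1" "e1 \<le> E4" and E24: "E2 \<le> E4" and e3: "e3 \<le> E4"
    and d: "0 \<le> d" and dd: "E4 * d < 1 / (16 * nr)" and L: "L = c * sqrt nr / E2"
  shows "sr * (E2 * L / (3 * mr) + (1 + e1) * d) + E4 * (2 * L\<^sup>2) / (3 * mr - 3)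
         + 3 * mr * ((1 + e1 + E2 + e3) * d) + L\<^sup>2 / (mr - 1) < 1/2"
proof -
  have nr0: "0 < nr" using n m s by linarith
  have E20: "0 < E2" using E2 by linarith
  have E41: "1 \<le> E4" using E4 E2 by (metis mult_le_cancel_left1 order_trans less_le_trans zero_less_one mult.right_neutral mult_left_mono zero_le_one)
  have L0: "0 \<le> L" using L c E20 nr0 by simp
  have EL: "E2 * L = c * sqrt nr" using L E20 by simp
  have L2: "E4 * L\<^sup>2 = c\<^sup>2 * nr"
  proof -
    have "E4 * L\<^sup>2 = (E2 * L) * (E2 * L)" using E4 by (simp add: power2_eq_square algebra_simps)
    also have "\<dots> = c\<^sup>2 * (sqrt nr * sqrt nr)" unfolding EL by (simp add: power2_eq_square algebra_simps)
    also have "\<dots> = c\<^sup>2 * nr" using nr0 by simp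
    finally show ?thesis .
  qed
  have L2b: "L\<^sup>2 \<le> c\<^sup>2 * nr"
  proof -
    have "L\<^sup>2 \<le> E4 * L\<^sup>2" using E41 by (simp add: mult_le_cancel_right1)
    then show ?thesis using L2 by simp
  qed
  have sq: "sqrt nr \<le> nr / 10"
  proof -
    have "10 \<le> sqrt nr" using n m s real_sqrt_le_iff[of 100 nr] by simp
    moreover have "sqrt nr * sqrt nr = nr" using nr0 by simp
    ultimately have "10 * sqrt nr \<le> nr" by (metis mult_right_mono real_sqrt_ge_zero less_imp_le nr0)
    then show ?thesis by simp
  qed
  have t1: "sr * (E2 * L / (3 * mr)) \<le> 1/40"
  proof -
    have "sr * (E2 * L / (3 * mr)) = sr * c * sqrt nr / (3 * mr)" using EL by simp
    also have "\<dots> \<le> 3 * c * (nr / 10) / (3 * mr)"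
      using s sq c m nr0 by (intro divide_right_mono mult_mono) auto
    also have "\<dots> = c * nr / (10 * mr)" using m by simp
    also have "\<dots> \<le> c * (4 * mr) / (10 * mr)" using n s m c by (intro divide_right_mono mult_left_mono) auto
    also have "\<dots> = 1/40" using c m by simp
    finally show ?thesis .
  qed
  have t2: "E4 * (2 * L\<^sup>2) / (3 * mr - 3) \<le> 1/64"
  proof -
    have "E4 * (2 * L\<^sup>2) / (3 * mr - 3) = 2 * c\<^sup>2 * nr / (3 * mr - 3)" using L2 by (simp add: algebra_simps)
    also have "\<dots> \<le> 2 * c\<^sup>2 * (2 * (3 * mr - 3)) / (3 * mr - 3)"
      using n s m by (intro divide_right_mono mult_left_mono) auto
    also have "\<dots> = 4 * c\<^sup>2"
    proof -
      have nz: "3 * mr - 3 \<noteq> 0" using m by simp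
      show ?thesis using nz by (simp add: field_simps)
    qed
    also have "\<dots> = 1/64" unfolding c by (simp add: power2_eq_square)
    finally show ?thesis .
  qed
  have t4: "L\<^sup>2 / (mr - 1) \<le> 1/64"
  proof -
    have "L\<^sup>2 / (mr - 1) \<le> c\<^sup>2 * nr / (mr - 1)" using L2b m by (intro divide_right_mono) auto
    also have "\<dots> \<le> c\<^sup>2 * (4 * (mr - 1)) / (mr - 1)"
      using n s m by (intro divide_right_mono mult_left_mono) auto
    also have "\<dots> = 4 * c\<^sup>2"
    proof -
      have nz: "mr - 1 \<noteq> 0" using m by simp
      show ?thesis using nz by (simp add: field_simps)
    qed
    also have "\<dots> = 1/64" unfolding c by (simp add: power2_eq_square)
    finally show ?thesis .
  qed
  have td: "sr * ((1 + e1) * d) + 3 * mr * ((1 + e1 + E2 + e3) * d) < 1/4"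
  proof -
    have a: "(1 + e1) * d \<le> (2 * E4) * d" using e1 E41 d by (intro mult_right_mono) auto
    have b: "(1 + e1 + E2 + e3) * d \<le> (4 * E4) * d" using e1 E41 E24 e3 d by (intro mult_right_mono) auto
    have "sr * ((1 + e1) * d) + 3 * mr * ((1 + e1 + E2 + e3) * d) \<le> sr * (2 * E4 * d) + 3 * mr * (4 * E4 * d)"
      using a b s m by (intro add_mono mult_left_mono) auto
    also have "\<dots> \<le> 4 * nr * (E4 * d)" using n s m d E41 by (simp add: algebra_simps)
    also have "\<dots> < 4 * nr * (1 / (16 * nr))" using dd nr0 by (intro mult_strict_left_mono) auto
    also have "\<dots> = 1/4" using nr0 by simp
    finally show ?thesis .
  qed
  have "sr * (E2 * L / (3 * mr) + (1 + e1) * d) = sr * (E2 * L / (3 * mr)) + sr * ((1 + e1) * d)"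
    by (simp add: algebra_simps)
  then show ?thesis using t1 t2 t4 td by linarith
qed


theorem theorem2:
  shows "\<exists>c>0. \<exists>N::nat. \<forall>n\<ge>N. \<forall>(\<epsilon>::real) (\<delta>::real) (T::qtree pmf).
           \<epsilon> > 0 \<longrightarrow> \<delta> > 0 \<longrightarrow> exp (4 * \<epsilon>) * \<delta> < 1 / (16 * real n) \<longrightarrow>
           diff_oblivious 2 n \<epsilon> \<delta> T \<longrightarrow> is_tester 2 n (3/4) (1/3) T \<longrightarrow>
           (\<exists>f. valid_graph 2 n f \<and>
              (\<exists>t\<in>set_pmf T. real (num_probes t f) \<ge> c * sqrt (real n) / exp (2 * \<epsilon>)))"
proof (rule exI[of _ "1/16"], rule conjI)
  show "(0::real) < 1/16" by simp
  show "\<exists>N::nat. \<forall>n\<ge>N. \<forall>(\<epsilon>::real) (\<delta>::real) (T::qtree pmf).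
           \<epsilon> > 0 \<longrightarrow> \<delta> > 0 \<longrightarrow> exp (4 * \<epsilon>) * \<delta> < 1 / (16 * real n) \<longrightarrow>
           diff_oblivious 2 n \<epsilon> \<delta> T \<longrightarrow> is_tester 2 n (3/4) (1/3) T \<longrightarrow>
           (\<exists>f. valid_graph 2 n f \<and>
              (\<exists>t\<in>set_pmf T. real (num_probes t f) \<ge> 1/16 * sqrt (real n) / exp (2 * \<epsilon>)))"
  proof (rule exI[of _ 400], intro allI impI)
    fix n :: nat and e d :: real and T :: "qtree pmf"
    assume n: "400 \<le> n" and e: "0 < e" and d: "0 < d" and dd: "exp (4 * e) * d < 1 / (16 * real n)"
      and DO: "diff_oblivious 2 n e d T" and TS: "is_tester 2 n (3/4) (1/3) T"
    show "\<exists>f. valid_graph 2 n f \<and> (\<exists>t\<in>set_pmf T. real (num_probes t f) \<ge> 1/16 * sqrt (real n) / exp (2 * e))"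
    proof (rule ccontr)
      assume H: "\<not> (\<exists>f. valid_graph 2 n f \<and> (\<exists>t\<in>set_pmf T. real (num_probes t f) \<ge> 1/16 * sqrt (real n) / exp (2 * e)))"
      define L where "L = 1/16 * sqrt (real n) / exp (2 * e)"
      have HB: "\<forall>f. valid_graph 2 n f \<longrightarrow> (\<forall>t\<in>set_pmf T. real (num_probes t f) < L)"
        using H unfolding L_def by (auto simp: not_le)
      have n1: "1 \<le> n" using n by simp
      have m: "133 \<le> mB n" using n unfolding mB_def by linarith
      have m3: "3 \<le> mB n" using m by simp
      note MI = main_ineq[OF DO TS HB n1 m3]
      define mr where "mr = real (mB n)"
      define sr where "sr = real (n - 3 * mB n)"
      have r1: "real (3 * mB n) = 3 * mr" unfolding mr_def by simp
      have r2: "real (3 * mB n - 3) = 3 * mr - 3" unfolding mr_def using m3 by (simp add: of_nat_diff)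
      have r3: "real (mB n - 1) = mr - 1" unfolding mr_def using m3 by (simp add: of_nat_diff)
      have lt: "3 * mB n < n" using mB_lt[OF n1] .
      have nf: "n \<le> 3 * mB n + 3" unfolding mB_def by linarith
      have nr: "real n = 3 * mr + sr" unfolding mr_def sr_def using lt by simp
      have s1: "1 \<le> sr" unfolding sr_def using lt by simp
      have s3: "sr \<le> 3" unfolding sr_def using nf by simp
      have mr: "133 \<le> mr" unfolding mr_def using m by simp
      have E2: "1 \<le> exp (2 * e)" using e by simp
      have E4: "exp (4 * e) = exp (2 * e) * exp (2 * e)" by (simp add: mult_exp_exp)
      have e1: "1 \<le> exp e" "exp e \<le> exp (4 * e)" using e by auto
      have E24: "exp (2 * e) \<le> exp (4 * e)" using e by simp
      have e3: "exp (3 * e) \<le> exp (4 * e)" using e by simp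
      have dd': "exp (4 * e) * d < 1 / (16 * (3 * mr + sr))" using dd nr by simp
      note FA = final_arith[OF refl mr refl s1 s3 E2 E4 e1 E24 e3 less_imp_le[OF d] dd' L_def[unfolded nr]]
      have "1/2 \<le> sr * (exp (2 * e) * L / (3 * mr) + (1 + exp e) * d) + exp (4 * e) * (2 * L\<^sup>2) / (3 * mr - 3)
         + 3 * mr * ((1 + exp e + exp (2 * e) + exp (3 * e)) * d) + L\<^sup>2 / (mr - 1)"
        using MI unfolding r1 r2 r3 sr_def[symmetric] .
      then show False using FA by linarith
    qed
  qed
qed


end
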